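(* Let $\mathcal{A}=(Q,\delta,I,F)$ be a complete Büchi automaton with $n=|Q|$, let $\mathcal{B}_S$ be the automaton produced from $\mathcal{A}$ by Schewe's rank-based complementation construction (described in the context), and let $\mathcal{B}_S^{\mathit{de}}$ be the automaton obtained from the same construction in which every occurrence of $Q_2$ is replaced by $$Q_2^{\mathit{de}} = Q_2\setminus\{(S,O,f,i)\in Q_2 \mid \exists p,q\in S:\ p\preceq_{\mathit{de}} q \wedge f(p)>\lceil f(q)\rceil\},$$ where $\lceil x\rceil$ denotes the smallest even number $\ge x$. Then $\mathcal{L}(\mathcal{B}_S^{\mathit{de}})=\mathcal{L}(\mathcal{B}_S)$.
   Context: Fix a finite nonempty alphabet $\Sigma$. A Büchi automaton (BA) is $\mathcal{A}=(Q,\delta,I,F)$ with finite state set $Q$, transition function $\delta:Q\times\Sigma\to 2^Q$, initial states $I$ and accepting states $F$; it is complete if $\delta(q,a)\neq\emptyset$ for all $q,a$. We write $\delta(P,a)=\bigcup_{p\in P}\delta(p,a)$. A run from $q$ on an infinite word $\alpha=\alpha_0\alpha_1\cdots$ is a sequence $\rho_0\rho_1\cdots$ with $\rho_0=q$ and $\rho_{i+1}\in\delta(\rho_i,\alpha_i)$; it is accepting if some state of $F$ occurs infinitely often. $\mathcal{L}(\mathcal{A})$ is the set of infinite words having an accepting run from some initial state. Delayed simulation: in the simulation game from $(p_0,r_0)$, in round $i$ Spoiler picks a transition $p_i\xrightarrow{\alpha_i}p_{i+1}$ and Duplicator answers with $r_i\xrightarrow{\alpha_i}r_{i+1}$ on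 the same symbol; a Duplicator strategy is a map $\sigma$ with $\sigma(r,p\xrightarrow{a}p')\in\delta(r,a)$ (no lookahead). Duplicator wins the delayed game if for all $i$, $p_i\in F$ implies $r_k\in F$ for some $k\ge i$. The (maximal) delayed simulation $\preceq_{\mathit{de}}$ is given by $p\preceq_{\mathit{de}}r$ iff Duplicator has a winning strategy from $(p,r)$. Schewe's construction. A ranking is $f:Q\to\{0,1,\dots,2n\}$ with $f(q)$ even for $q\in F$; $\mathrm{rank}(f)=\max_q f(q)$. For $S\subseteq Q$, $f$ is $S$-tight if (i) $\mathrm{rank}(f)=r$ is odd, (ii) $\{f(s)\mid s\in S\}\supseteq\{1,3,\dots,r\}$, (iii) $\{f(q)\mid q\notin S\}=\{0\}$; $\mathcal{T}$ is the set of $Q$-tight rankings. $\mathcal{B}_S=(Q',\delta',I',F')$: $Q'=Q_1\cup Q_2$, $Q_1=2^Q$, $Q_2=\{(S,O,f,i)\in 2^Q\times2^Q\times\mathcal{T}\times\{0,2,\dots,2n-2\}\mid f \text{ is } S\text{-tight},\ O\subseteq S\cap f^{-1}(i)\}$; $I'=\{I\}$; $\delta'=\delta_1\cup\delta_2\cup\delta_3$ with $\delta_1(S,a)=\{\delta(S,a)\}$; $\delta_2(S,a)=\{(S',\emptyset,f,0)\in Q_2\mid S'=\delta(S,a), f \text{ is } S'\text{-tight}\}$; and $(S',O',f',i')\in\delta_3((S,O,f,i),a)$ iff $(S',O',f',i')\in Q_2$, $S'=\delta(S,a)$, $f'(q')\le f(q)$ for all $q\in S$, $q'\in\delta(q,a)$,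 $\mathrm{rank}(f)=\mathrm{rank}(f')$, $f'$ is $S'$-tight, and either ($O=\emptyset$, $i'=(i+2)\bmod(\mathrm{rank}(f')+1)$, $O'=f'^{-1}(i')$) or ($O\ne\emptyset$, $i'=i$, $O'=\delta(O,a)\cap f'^{-1}(i)$); $F'=\{\emptyset\}\cup\{(S,\emptyset,f,i)\in Q_2\}$. *)

theory Defs
  imports Main
begin

text \<open>States of the input automaton form a finite type 'q
  (so Q = UNIV and n = card (UNIV :: 'q set)). The complement automaton has states of an
  infinite type, hence languages are defined for arbitrary state types.\<close>

record ('q, 'a) ba =
  trans :: "'q \<Rightarrow> 'a \<Rightarrow> 'q set"
  init  :: "'q set"
  acc   :: "'q set"

definition complete :: "('q, 'a) ba \<Rightarrow> bool" where
  "complete A \<longleftrightarrow> (\<forall>q a. trans A q a \<noteq> {})"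

definition trans_set :: "('q, 'a) ba \<Rightarrow> 'q set \<Rightarrow> 'a \<Rightarrow> 'q set" where
  "trans_set A P a = (\<Union>p\<in>P. trans A p a)"

definition is_run :: "('q, 'a) ba \<Rightarrow> 'q \<Rightarrow> (nat \<Rightarrow> 'a) \<Rightarrow> (nat \<Rightarrow> 'q) \<Rightarrow> bool" where
  "is_run A q w \<rho> \<longleftrightarrow> \<rho> 0 = q \<and> (\<forall>i. \<rho> (Suc i) \<in> trans A (\<rho> i) (w i))"

definition accepting_run :: "('q, 'a) ba \<Rightarrow> (nat \<Rightarrow> 'q) \<Rightarrow> bool" where
  "accepting_run A \<rho> \<longleftrightarrow> (\<exists>s\<in>acc A. infinite {i. \<rho> i = s})"

definition lang :: "('q, 'a) ba \<Rightarrow> (nat \<Rightarrow> 'a) set" where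
  "lang A = {w. \<exists>q\<in>init A. \<exists>\<rho>. is_run A q w \<rho> \<and> accepting_run A \<rho>}"

text \<open>A Duplicator strategy maps Duplicator's current state r and Spoiler's
  transition (p, a, p') to a successor of r under a (no lookahead).\<close>

definition valid_strategy :: "('q, 'a) ba \<Rightarrow> ('q \<Rightarrow> 'q \<times> 'a \<times> 'q \<Rightarrow> 'q) \<Rightarrow> bool" where
  "valid_strategy A \<sigma> \<longleftrightarrow>
     (\<forall>r p a p'. p' \<in> trans A p a \<longrightarrow> \<sigma> r (p, a, p') \<in> trans A r a)"

primrec dup_play ::
  "('q \<Rightarrow> 'q \<times> 'a \<times> 'q \<Rightarrow> 'q) \<Rightarrow> 'q \<Rightarrow> (nat \<Rightarrow> 'a) \<Rightarrow> (nat \<Rightarrow> 'q) \<Rightarrow> nat \<Rightarrow> 'q" where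
  "dup_play \<sigma> r0 \<alpha> ps 0 = r0"
| "dup_play \<sigma> r0 \<alpha> ps (Suc i) = \<sigma> (dup_play \<sigma> r0 \<alpha> ps i) (ps i, \<alpha> i, ps (Suc i))"

definition de_sim :: "('q, 'a) ba \<Rightarrow> 'q \<Rightarrow> 'q \<Rightarrow> bool" where
  "de_sim A p r \<longleftrightarrow>
     (\<exists>\<sigma>. valid_strategy A \<sigma> \<and>
        (\<forall>\<alpha> ps. is_run A p \<alpha> ps \<longrightarrow>
           (\<forall>i. ps i \<in> acc A \<longrightarrow> (\<exists>k\<ge>i. dup_play \<sigma> r \<alpha> ps k \<in> acc A))))"

datatype 'q sstate = Q1st "'q set" | Q2st "'q set" "'q set" "'q \<Rightarrow> nat" nat

definition is_ranking :: "('q::finite, 'a) ba \<Rightarrow> ('q \<Rightarrow> nat) \<Rightarrow> bool" where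
  "is_ranking A f \<longleftrightarrow> (\<forall>q. f q \<le> 2 * card (UNIV :: 'q set)) \<and> (\<forall>q\<in>acc A. even (f q))"

definition rank :: "('q::finite \<Rightarrow> nat) \<Rightarrow> nat" where
  "rank f = Max (range f)"

text \<open>Condition (iii) is read as: f q = 0 for every q outside S.\<close>
definition tight :: "'q::finite set \<Rightarrow> ('q \<Rightarrow> nat) \<Rightarrow> bool" where
  "tight S f \<longleftrightarrow> odd (rank f)
     \<and> (\<forall>j. odd j \<and> j \<le> rank f \<longrightarrow> j \<in> f ` S)
     \<and> (\<forall>q. q \<notin> S \<longrightarrow> f q = 0)"

definition tight_rankings :: "('q::finite, 'a) ba \<Rightarrow> ('q \<Rightarrow> nat) set" where
  "tight_rankings A = {f. is_ranking A f \<and> tight UNIV f}"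

definition Q2 :: "('q::finite, 'a) ba \<Rightarrow> ('q set \<times> 'q set \<times> ('q \<Rightarrow> nat) \<times> nat) set" where
  "Q2 A = {(S, Ob, f, i). f \<in> tight_rankings A \<and> even i \<and> i \<le> 2 * card (UNIV :: 'q set) - 2
            \<and> tight S f \<and> Ob \<subseteq> S \<inter> f -` {i}}"

definition schewe_trans ::
  "('q::finite, 'a) ba \<Rightarrow> ('q set \<times> 'q set \<times> ('q \<Rightarrow> nat) \<times> nat) set
   \<Rightarrow> 'q sstate \<Rightarrow> 'a \<Rightarrow> 'q sstate set" where
  "schewe_trans A QQ st a = (case st of
     Q1st S \<Rightarrow>
       {Q1st (trans_set A S a)}
       \<union> {Q2st S' {} f 0 | S' f. (S', {}, f, 0) \<in> QQ \<and> S' = trans_set A S a \<and> tight S' f}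
   | Q2st S Ob f i \<Rightarrow>
       {Q2st S' Ob' f' i' | S' Ob' f' i'.
          (S', Ob', f', i') \<in> QQ \<and> S' = trans_set A S a
          \<and> (\<forall>q\<in>S. \<forall>q'\<in>trans A q a. f' q' \<le> f q)
          \<and> rank f = rank f' \<and> tight S' f'
          \<and> ((Ob = {} \<and> i' = (i + 2) mod (rank f' + 1) \<and> Ob' = S' \<inter> f' -` {i'})
             \<or> (Ob \<noteq> {} \<and> i' = i \<and> Ob' = trans_set A Ob a \<inter> f' -` {i}))})"

definition schewe_gen ::
  "('q::finite, 'a) ba \<Rightarrow> ('q set \<times> 'q set \<times> ('q \<Rightarrow> nat) \<times> nat) set
   \<Rightarrow> ('q sstate, 'a) ba" where
  "schewe_gen A QQ =
     \<lparr> trans = schewe_trans A QQ,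
       init = {Q1st (init A)},
       acc = {Q1st {}} \<union> {Q2st S {} f i | S f i. (S, {}, f, i) \<in> QQ} \<rparr>"

definition schewe :: "('q::finite, 'a) ba \<Rightarrow> ('q sstate, 'a) ba" where
  "schewe A = schewe_gen A (Q2 A)"

definition ceil_even :: "nat \<Rightarrow> nat" where
  "ceil_even x = (if even x then x else x + 1)"

definition Q2_de :: "('q::finite, 'a) ba \<Rightarrow> ('q set \<times> 'q set \<times> ('q \<Rightarrow> nat) \<times> nat) set" where
  "Q2_de A = Q2 A - {(S, Ob, f, i) \<in> Q2 A.
                        \<exists>p\<in>S. \<exists>q\<in>S. de_sim A p q \<and> f p > ceil_even (f q)}"

definition schewe_de :: "('q::finite, 'a) ba \<Rightarrow> ('q sstate, 'a) ba" where
  "schewe_de A = schewe_gen A (Q2_de A)"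

end

theory Submission
  imports Defs "HOL-Library.Infinite_Set"
begin

locale dag =
  fixes A :: "('q::finite, 'a) ba" and w :: "nat \<Rightarrow> 'a" and j0 :: nat
begin

primrec Sq :: "nat \<Rightarrow> 'q set" where
  "Sq 0 = init A"
| "Sq (Suc j) = trans_set A (Sq j) (w j)"

definition V :: "(nat \<times> 'q) set" where
  "V = {(j, q). j0 \<le> j \<and> q \<in> Sq j}"

inductive reach :: "(nat \<times> 'q) set \<Rightarrow> nat \<Rightarrow> 'q \<Rightarrow> nat \<Rightarrow> 'q \<Rightarrow> bool" for G where
  rrefl: "(j, q) \<in> G \<Longrightarrow> reach G j q j q"
| rstep: "reach G j q l u \<Longrightarrow> u' \<in> trans A u (w l) \<Longrightarrow> (Suc l, u') \<in> G \<Longrightarrow> reach G j q (Suc l) u'"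

definition ipath :: "(nat \<times> 'q) set \<Rightarrow> nat \<Rightarrow> (nat \<Rightarrow> 'q) \<Rightarrow> bool" where
  "ipath G j \<pi> \<longleftrightarrow> (\<forall>k. (j + k, \<pi> k) \<in> G \<and> \<pi> (Suc k) \<in> trans A (\<pi> k) (w (j + k)))"

definition inf_from :: "(nat \<times> 'q) set \<Rightarrow> nat \<Rightarrow> 'q \<Rightarrow> bool" where
  "inf_from G j q \<longleftrightarrow> (\<exists>\<pi>. \<pi> 0 = q \<and> ipath G j \<pi>)"

definition Ffree :: "(nat \<times> 'q) set \<Rightarrow> nat \<Rightarrow> 'q \<Rightarrow> bool" where
  "Ffree G j q \<longleftrightarrow> (\<forall>l u. reach G j q l u \<longrightarrow> u \<notin> acc A)"

primrec Gs :: "nat \<Rightarrow> (nat \<times> 'q) set" where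
  "Gs 0 = V"
| "Gs (Suc m) = (if even m then {(j, q) \<in> Gs m. inf_from (Gs m) j q}
                 else {(j, q) \<in> Gs m. \<not> Ffree (Gs m) j q})"

definition rk :: "nat \<Rightarrow> 'q \<Rightarrow> nat" where
  "rk j q = (LEAST m. (j, q) \<notin> Gs (Suc m))"

lemma Gs_Suc_sub: "Gs (Suc m) \<subseteq> Gs m"
  by auto

lemma Gs_anti: "m \<le> m' \<Longrightarrow> Gs m' \<subseteq> Gs m"
proof (induction m' rule: dec_induct)
  case base then show ?case by simp
next
  case (step n) then show ?case using Gs_Suc_sub[of n] by blast
qed

lemma Gs_V: "Gs m \<subseteq> V"
  using Gs_anti[of 0 m] by simp

lemma reach_G: "reach G j q l u \<Longrightarrow> (j, q) \<in> G \<and> (l, u) \<in> G \<and> j \<le> l"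
  by (induction rule: reach.induct) auto

lemma reach_mono: "reach G j q l u \<Longrightarrow> G \<subseteq> H \<Longrightarrow> reach H j q l u"
  by (induction rule: reach.induct) (auto intro: reach.intros)

lemma reach_trans: "reach G l u l' u' \<Longrightarrow> reach G j q l u \<Longrightarrow> reach G j q l' u'"
  by (induction rule: reach.induct) (auto intro: reach.intros)

lemma reach_same: "reach G j q j u \<Longrightarrow> u = q"
  by (cases rule: reach.cases) (auto dest: reach_G)

lemma reach_one: "(j, q) \<in> G \<Longrightarrow> q' \<in> trans A q (w j) \<Longrightarrow> (Suc j, q') \<in> G \<Longrightarrow> reach G j q (Suc j) q'"
  by (auto intro: reach.intros)

lemma reach_prepend: "(j, q) \<in> G \<Longrightarrow> q' \<in> trans A q (w j) \<Longrightarrow> reach G (Suc j) q' l u \<Longrightarrow> reach G j q l u"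
  by (meson reach_G reach_one reach_trans)

lemma reach_trunc: "reach G j q l u \<Longrightarrow> j \<le> l' \<Longrightarrow> l' \<le> l \<Longrightarrow> \<exists>u'. reach G j q l' u'"
proof (induction rule: reach.induct)
  case (rrefl j q) then show ?case by (auto intro: reach.intros)
next
  case (rstep j q l u u')
  then show ?case by (cases "l' = Suc l") (auto intro: reach.intros)
qed

lemma reach_front: "reach G j q l u \<Longrightarrow> j < l \<Longrightarrow> \<exists>s. s \<in> trans A q (w j) \<and> reach G (Suc j) s l u"
proof (induction rule: reach.induct)
  case (rrefl j q) then show ?case by simp
next
  case (rstep j q l u u')
  show ?case
  proof (cases "j < l")
    case True
    then show ?thesis using rstep by (auto intro: reach.intros)
  next
    case False
    then have "l = j" using reach_G[OF rstep(1)] by simp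
    then have "u = q" using reach_same rstep(1) by simp
    then show ?thesis using rstep \<open>l = j\<close> by (auto intro: reach.intros)
  qed
qed

lemma ipath_suffix: "ipath G j \<pi> \<Longrightarrow> ipath G (j + t) (\<lambda>k. \<pi> (t + k))"
  unfolding ipath_def by (simp add: add.assoc)

lemma ipath_reach: "ipath G j \<pi> \<Longrightarrow> reach G j (\<pi> 0) (j + k) (\<pi> k)"
proof (induction k)
  case 0 then show ?case unfolding ipath_def by (metis add_0_right reach.rrefl)
next
  case (Suc k) then show ?case unfolding ipath_def
    by (metis add_Suc_right reach.rstep)
qed

lemma ipath_mono: "ipath G j \<pi> \<Longrightarrow> G \<subseteq> H \<Longrightarrow> ipath H j \<pi>"
  unfolding ipath_def by blast

lemma ipath_cons: "ipath G (Suc j) \<pi> \<Longrightarrow> (j, q) \<in> G \<Longrightarrow> \<pi> 0 \<in> trans A q (w j)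
   \<Longrightarrow> ipath G j (\<lambda>k. case k of 0 \<Rightarrow> q | Suc k' \<Rightarrow> \<pi> k')"
  unfolding ipath_def
  by (auto split: nat.splits)

lemma reach_ipath_concat:
  "reach G j q l u \<Longrightarrow> ipath G l \<pi>2 \<Longrightarrow> \<pi>2 0 = u
   \<Longrightarrow> \<exists>\<pi>. \<pi> 0 = q \<and> ipath G j \<pi> \<and> (\<forall>k. \<pi> (l - j + k) = \<pi>2 k)"
proof (induction arbitrary: \<pi>2 rule: reach.induct)
  case (rrefl j q) then show ?case by auto
next
  case (rstep j q l u u' \<pi>2)
  let ?\<pi> = "\<lambda>k. case k of 0 \<Rightarrow> u | Suc k' \<Rightarrow> \<pi>2 k'"
  have "(l, u) \<in> G" using reach_G[OF rstep(1)] by simp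
  then have ip: "ipath G l ?\<pi>" using ipath_cons rstep by auto
  obtain \<pi> where p: "\<pi> 0 = q" "ipath G j \<pi>" "\<forall>k. \<pi> (l - j + k) = ?\<pi> k"
    using rstep.IH[OF ip] by auto
  have jl: "j \<le> l" using reach_G[OF rstep(1)] by simp
  have "\<forall>k. \<pi> (Suc l - j + k) = \<pi>2 k"
  proof
    fix k
    have "Suc l - j + k = l - j + Suc k" using jl by simp
    moreover have "\<pi> (l - j + Suc k) = \<pi>2 k" using p(3) by (metis nat.case(2))
    ultimately show "\<pi> (Suc l - j + k) = \<pi>2 k" by metis
  qed
  then show ?case using p by auto
qed

lemma pigeon_anti:
  fixes P :: "nat \<Rightarrow> 'b::finite \<Rightarrow> bool"
  assumes "\<forall>k. \<exists>x. P k x" and "\<And>k k' x. P k' x \<Longrightarrow> k \<le> k' \<Longrightarrow> P k x"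
  shows "\<exists>x. \<forall>k. P k x"
proof (rule ccontr)
  assume "\<not> ?thesis"
  then have "\<forall>x. \<exists>k. \<not> P k x" by blast
  then obtain K where K: "\<And>x. \<not> P (K x) x" by metis
  define M where "M = Max (range K)"
  obtain x where "P M x" using assms(1) by blast
  moreover have "K x \<le> M" unfolding M_def by simp
  ultimately have "P (K x) x" using assms(2) by blast
  then show False using K by blast
qed

lemma konig:
  assumes "\<forall>k. \<exists>u. reach P j q (j + k) u"
  shows "inf_from P j q"
proof -
  define X where "X = {(l, u). \<forall>k. \<exists>u'. reach P l u (l + k) u'}"
  have step: "\<exists>u'. u' \<in> trans A u (w l) \<and> (Suc l, u') \<in> X" if "(l, u) \<in> X" for l u
  proof -
    have "\<forall>k. \<exists>s. s \<in> trans A u (w l) \<and> (\<exists>u''. reach P (Suc l) s (Suc l + k) u'')"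
    proof
      fix k
      have "\<forall>k. \<exists>u'. reach P l u (l + k) u'" using that unfolding X_def by simp
      then obtain u'' where "reach P l u (l + Suc k) u''" by blast
      then obtain s where "s \<in> trans A u (w l)" "reach P (Suc l) s (l + Suc k) u''"
        using reach_front by force
      then show "\<exists>s. s \<in> trans A u (w l) \<and> (\<exists>u''. reach P (Suc l) s (Suc l + k) u'')" by auto
    qed
    moreover have "s \<in> trans A u (w l) \<and> (\<exists>u''. reach P (Suc l) s (Suc l + k) u'')"
      if h: "s \<in> trans A u (w l) \<and> (\<exists>u''. reach P (Suc l) s (Suc l + k') u'')" "k \<le> k'" for k k' s
    proof -
      obtain u'' where "reach P (Suc l) s (Suc l + k') u''" using h by blast
      then have "\<exists>u'. reach P (Suc l) s (Suc l + k) u'"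
        by (rule reach_trunc) (use h in auto)
      then show ?thesis using h by blast
    qed
    ultimately obtain s where s: "\<forall>k. s \<in> trans A u (w l) \<and> (\<exists>u''. reach P (Suc l) s (Suc l + k) u'')"
      using pigeon_anti[where P="\<lambda>k s. s \<in> trans A u (w l) \<and> (\<exists>u''. reach P (Suc l) s (Suc l + k) u'')"]
      by blast
    then show ?thesis unfolding X_def by auto
  qed
  define nxt where "nxt l u = (SOME u'. u' \<in> trans A u (w l) \<and> (Suc l, u') \<in> X)" for l u
  define \<pi> where "\<pi> = rec_nat q (\<lambda>k v. nxt (j + k) v)"
  have \<pi>0: "\<pi> 0 = q" and \<pi>S: "\<pi> (Suc k) = nxt (j + k) (\<pi> k)" for k unfolding \<pi>_def by simp_all
  have inX: "(j + k, \<pi> k) \<in> X" for k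
  proof (induction k)
    case 0 then show ?case using assms \<pi>0 unfolding X_def by simp
  next
    case (Suc k)
    then show ?case unfolding \<pi>S nxt_def using someI_ex[OF step[OF Suc]] by simp
  qed
  have tr: "\<pi> (Suc k) \<in> trans A (\<pi> k) (w (j + k))" for k
    unfolding \<pi>S nxt_def using someI_ex[OF step[OF inX[of k]]] by simp
  have "(j + k, \<pi> k) \<in> P" for k
    using inX[of k] unfolding X_def using reach_G by fastforce
  then show ?thesis unfolding inf_from_def ipath_def using \<pi>0 tr by blast
qed

end

context dag begin

lemma ipath_inf: "ipath G j \<pi> \<Longrightarrow> inf_from G j (\<pi> 0)"
  unfolding inf_from_def by blast

lemma V_step: "(j, q) \<in> V \<Longrightarrow> q' \<in> trans A q (w j) \<Longrightarrow> (Suc j, q') \<in> V"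
  unfolding V_def by (auto simp: trans_set_def)

lemma gs_back: "(j, q) \<in> V \<Longrightarrow> q' \<in> trans A q (w j) \<Longrightarrow> (Suc j, q') \<in> Gs m \<Longrightarrow> (j, q) \<in> Gs m"
proof (induction m)
  case 0 then show ?case by simp
next
  case (Suc m)
  have qm: "(j, q) \<in> Gs m" using Suc Gs_Suc_sub by blast
  have q'm: "(Suc j, q') \<in> Gs m" using Suc Gs_Suc_sub by blast
  show ?case
  proof (cases "even m")
    case True
    then obtain \<pi> where \<pi>: "\<pi> 0 = q'" "ipath (Gs m) (Suc j) \<pi>"
      using Suc.prems(3) by (auto simp: inf_from_def)
    define \<pi>' where "\<pi>' = (\<lambda>k. case k of 0 \<Rightarrow> q | Suc k' \<Rightarrow> \<pi> k')"
    have "ipath (Gs m) j \<pi>'"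
      using ipath_cons[OF \<pi>(2) qm] \<pi>(1) Suc.prems(2) unfolding \<pi>'_def by simp
    moreover have "\<pi>' 0 = q" unfolding \<pi>'_def by simp
    ultimately have "inf_from (Gs m) j q" unfolding inf_from_def by blast
    then show ?thesis using True qm by simp
  next
    case False
    then obtain l u where "reach (Gs m) (Suc j) q' l u" "u \<in> acc A"
      using Suc.prems(3) by (auto simp: Ffree_def)
    then have "reach (Gs m) j q l u" using reach_prepend qm Suc.prems(2) by blast
    then have "\<not> Ffree (Gs m) j q" using \<open>u \<in> acc A\<close> unfolding Ffree_def by blast
    then show ?thesis using False qm by simp
  qed
qed

lemma odd_inf: "odd m \<Longrightarrow> (j, q) \<in> Gs m \<Longrightarrow> inf_from (Gs m) j q"
proof -
  assume "odd m" "(j, q) \<in> Gs m"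
  then obtain p where m: "m = Suc p" "even p" by (cases m) auto
  then have "inf_from (Gs p) j q" using \<open>(j, q) \<in> Gs m\<close> by simp
  then obtain \<pi> where \<pi>: "\<pi> 0 = q" "ipath (Gs p) j \<pi>" unfolding inf_from_def by blast
  have "ipath (Gs m) j \<pi>" unfolding ipath_def
  proof
    fix k
    have "ipath (Gs p) (j + k) (\<lambda>i. \<pi> (k + i))" using ipath_suffix[OF \<pi>(2)] .
    from ipath_inf[OF this] have "inf_from (Gs p) (j + k) (\<pi> k)" by simp
    moreover have "(j + k, \<pi> k) \<in> Gs p" "\<pi> (Suc k) \<in> trans A (\<pi> k) (w (j + k))"
      using \<pi>(2) unfolding ipath_def by auto
    ultimately show "(j + k, \<pi> k) \<in> Gs m \<and> \<pi> (Suc k) \<in> trans A (\<pi> k) (w (j + k))"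
      using m by simp
  qed
  then show ?thesis using \<pi>(1) unfolding inf_from_def by blast
qed

end

locale dag_g = dag A w j0 for A :: "('q::finite, 'a) ba" and w j0 +
  fixes g :: "nat \<Rightarrow> 'q \<Rightarrow> nat"
  assumes compl: "complete A"
  and Sq_ne: "Sq j0 \<noteq> {}"
  and g_mono: "\<And>j q q'. j0 \<le> j \<Longrightarrow> q \<in> Sq j \<Longrightarrow> q' \<in> trans A q (w j) \<Longrightarrow> g (Suc j) q' \<le> g j q"
  and g_even: "\<And>j q. j0 \<le> j \<Longrightarrow> q \<in> acc A \<Longrightarrow> even (g j q)"
  and g_bound: "\<And>j q. j0 \<le> j \<Longrightarrow> g j q \<le> 2 * card (UNIV :: 'q set)"
  and g_path: "\<And>j \<pi> c. ipath V j \<pi> \<Longrightarrow> (\<forall>k. g (j + k) (\<pi> k) = c) \<Longrightarrow> odd c"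
begin

lemma reach_g: "reach G j q l u \<Longrightarrow> G \<subseteq> V \<Longrightarrow> g l u \<le> g j q"
proof (induction rule: reach.induct)
  case (rrefl j q) then show ?case by simp
next
  case (rstep j q l u u')
  have "(l, u) \<in> V" using reach_G[OF rstep(1)] rstep(5) by blast
  then have "g (Suc l) u' \<le> g l u" using g_mono rstep(2) unfolding V_def by auto
  then show ?case using rstep by simp
qed

lemma not_in_Gs: "(j, q) \<in> V \<Longrightarrow> g j q < m \<Longrightarrow> (j, q) \<notin> Gs m"
proof (induction m arbitrary: j q)
  case 0 then show ?case by simp
next
  case (Suc m)
  show ?case
  proof (cases "g j q < m")
    case True then show ?thesis using Suc Gs_Suc_sub by blast
  next
    case False
    then have gm: "g j q = m" using Suc.prems by simp
    show ?thesis
    proof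
      assume inS: "(j, q) \<in> Gs (Suc m)"
      then have inm: "(j, q) \<in> Gs m" using Gs_Suc_sub by blast
      have const: "g l u = m" if "reach (Gs m) j q l u" for l u
      proof -
        have "g l u \<le> m" using reach_g[OF that Gs_V] gm by simp
        moreover have "(l, u) \<in> Gs m" using reach_G[OF that] by simp
        then have "\<not> g l u < m" using Suc.IH Gs_V by blast
        ultimately show ?thesis by simp
      qed
      show False
      proof (cases "even m")
        case True
        then obtain \<pi> where \<pi>: "\<pi> 0 = q" "ipath (Gs m) j \<pi>"
          using inS by (auto simp: inf_from_def)
        have "\<forall>k. g (j + k) (\<pi> k) = m"
        proof
          fix k show "g (j + k) (\<pi> k) = m" using const[OF ipath_reach[OF \<pi>(2), of k, unfolded \<pi>(1)]] .
        qed
        then have "odd m" using g_path ipath_mono[OF \<pi>(2) Gs_V] by blast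
        then show False using True by simp
      next
        case False
        then obtain l u where lu: "reach (Gs m) j q l u" "u \<in> acc A"
          using inS by (auto simp: Ffree_def)
        then have "g l u = m" using const by blast
        moreover have "j0 \<le> l" using reach_G[OF lu(1)] Gs_V unfolding V_def by blast
        ultimately have "even m" using g_even lu(2) by metis
        then show False using False by simp
      qed
    qed
  qed
qed

lemma rk_out: "(j, q) \<in> V \<Longrightarrow> (j, q) \<notin> Gs (Suc (rk j q))"
  unfolding rk_def by (rule LeastI[of _ "g j q"]) (rule not_in_Gs, auto)

lemma rk_le_g: "(j, q) \<in> V \<Longrightarrow> rk j q \<le> g j q"
  unfolding rk_def by (rule Least_le) (rule not_in_Gs, auto)

lemma Gs_iff: "(j, q) \<in> V \<Longrightarrow> (j, q) \<in> Gs m \<longleftrightarrow> m \<le> rk j q"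
proof
  assume V: "(j, q) \<in> V" and "(j, q) \<in> Gs m"
  show "m \<le> rk j q"
  proof (rule ccontr)
    assume "\<not> m \<le> rk j q"
    then have "Suc (rk j q) \<le> m" by simp
    then have "Gs m \<subseteq> Gs (Suc (rk j q))" by (rule Gs_anti)
    then show False using rk_out[OF V] \<open>(j, q) \<in> Gs m\<close> by blast
  qed
next
  assume V: "(j, q) \<in> V" and "m \<le> rk j q"
  show "(j, q) \<in> Gs m"
  proof (cases m)
    case 0 then show ?thesis using V by simp
  next
    case (Suc p)
    then have "p < rk j q" using \<open>m \<le> rk j q\<close> by simp
    then show ?thesis using not_less_Least[of p "\<lambda>m. (j, q) \<notin> Gs (Suc m)"] Suc
      unfolding rk_def by blast
  qed
qed

lemma rk_mono: "(j, q) \<in> V \<Longrightarrow> q' \<in> trans A q (w j) \<Longrightarrow> rk (Suc j) q' \<le> rk j q"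
proof -
  assume V: "(j, q) \<in> V" and t: "q' \<in> trans A q (w j)"
  have V': "(Suc j, q') \<in> V" using V_step[OF V t] .
  have "(Suc j, q') \<in> Gs (rk (Suc j) q')" using Gs_iff[OF V'] by simp
  then have "(j, q) \<in> Gs (rk (Suc j) q')" using gs_back[OF V t] by blast
  then show ?thesis using Gs_iff[OF V] by blast
qed

lemma rk_reach: "reach G j q l u \<Longrightarrow> G \<subseteq> V \<Longrightarrow> rk l u \<le> rk j q"
proof (induction rule: reach.induct)
  case (rrefl j q) then show ?case by simp
next
  case (rstep j q l u u')
  have "(l, u) \<in> V" using reach_G[OF rstep(1)] rstep(5) by blast
  then show ?case using rk_mono rstep by fastforce
qed

lemma reach_V_Gs: "reach V j q l u \<Longrightarrow> (l, u) \<in> Gs m \<Longrightarrow> reach (Gs m) j q l u"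
proof (induction rule: reach.induct)
  case (rrefl j q) then show ?case by (simp add: reach.rrefl)
next
  case (rstep j q l u u')
  have "(l, u) \<in> V" using reach_G[OF rstep(1)] by blast
  then have "(l, u) \<in> Gs m" using gs_back rstep by blast
  then show ?case using rstep by (auto intro: reach.intros)
qed

lemma rk_acc_even: "(j, q) \<in> V \<Longrightarrow> q \<in> acc A \<Longrightarrow> even (rk j q)"
proof (rule ccontr)
  assume V: "(j, q) \<in> V" and F: "q \<in> acc A" and "\<not> even (rk j q)"
  then have "odd (rk j q)" by simp
  have "(j, q) \<in> Gs (rk j q)" using Gs_iff V by simp
  moreover have "(j, q) \<notin> Gs (Suc (rk j q))" using rk_out V by simp
  ultimately have "Ffree (Gs (rk j q)) j q" using \<open>odd (rk j q)\<close> by auto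
  then show False using F reach.rrefl \<open>(j, q) \<in> Gs (rk j q)\<close> unfolding Ffree_def by blast
qed

lemma rk_odd_persist: "(j, q) \<in> V \<Longrightarrow> odd (rk j q) \<Longrightarrow> \<exists>q'\<in>trans A q (w j). rk (Suc j) q' = rk j q"
proof -
  assume V: "(j, q) \<in> V" and o: "odd (rk j q)"
  have "(j, q) \<in> Gs (rk j q)" using Gs_iff V by simp
  then obtain \<pi> where \<pi>: "\<pi> 0 = q" "ipath (Gs (rk j q)) j \<pi>" using odd_inf o unfolding inf_from_def by blast
  have "\<pi> (Suc 0) \<in> trans A (\<pi> 0) (w (j + 0))" "(j + Suc 0, \<pi> (Suc 0)) \<in> Gs (rk j q)"
    using \<pi>(2) unfolding ipath_def by blast+
  then have t: "\<pi> 1 \<in> trans A q (w j)" and g: "(Suc j, \<pi> 1) \<in> Gs (rk j q)"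
    using \<pi>(1) by simp_all
  have "(Suc j, \<pi> 1) \<in> V" using g Gs_V by blast
  then have "rk j q \<le> rk (Suc j) (\<pi> 1)" using g Gs_iff by blast
  moreover have "rk (Suc j) (\<pi> 1) \<le> rk j q" using rk_mono V t by blast
  ultimately show ?thesis using t by force
qed

lemma find_odd: "odd k \<Longrightarrow> (j, q) \<in> Gs k \<Longrightarrow> \<exists>l u. reach (Gs k) j q l u \<and> rk l u = k"
proof -
  assume o: "odd k" and jq: "(j, q) \<in> Gs k"
  define D where "D = {(l, u). reach (Gs k) j q l u}"
  have "(j, q) \<in> D" unfolding D_def using jq reach.rrefl by simp
  then obtain x where x: "x \<in> D" "\<forall>y. y \<in> D \<longrightarrow> g (fst x) (snd x) \<le> g (fst y) (snd y)"
    using ex_has_least_nat[of "\<lambda>x. x \<in> D" "(j, q)" "\<lambda>x. g (fst x) (snd x)"] by blast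
  obtain l u where xlu: "x = (l, u)" by fastforce
  have r: "reach (Gs k) j q l u" using x(1) xlu D_def by simp
  have luk: "(l, u) \<in> Gs k" using reach_G[OF r] by simp
  have const: "g l' u' = g l u" if "reach (Gs k) l u l' u'" for l' u'
  proof -
    have "(l', u') \<in> D" using reach_trans[OF that r] D_def by simp
    then have "g l u \<le> g l' u'" using x(2) xlu by fastforce
    moreover have "g l' u' \<le> g l u" using reach_g[OF that Gs_V] .
    ultimately show ?thesis by simp
  qed
  obtain \<pi> where \<pi>: "\<pi> 0 = u" "ipath (Gs k) l \<pi>" using odd_inf[OF o luk] unfolding inf_from_def by blast
  have "\<forall>i. g (l + i) (\<pi> i) = g l u"
  proof
    fix i show "g (l + i) (\<pi> i) = g l u" using const[OF ipath_reach[OF \<pi>(2), of i, unfolded \<pi>(1)]] .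
  qed
  then have og: "odd (g l u)" using g_path ipath_mono[OF \<pi>(2) Gs_V] by blast
  have "Ffree (Gs k) l u" unfolding Ffree_def
  proof (intro allI impI)
    fix l' u' assume h: "reach (Gs k) l u l' u'"
    then have "odd (g l' u')" using const og by simp
    moreover have "j0 \<le> l'" using reach_G[OF h] Gs_V unfolding V_def by blast
    ultimately show "u' \<notin> acc A" using g_even by blast
  qed
  then have "(l, u) \<notin> Gs (Suc k)" using o by simp
  moreover have luV: "(l, u) \<in> V" using luk Gs_V by blast
  ultimately have "rk l u = k" using Gs_iff[OF luV, of k] Gs_iff[OF luV, of "Suc k"] luk by simp
  then show ?thesis using r by blast
qed

lemma inf_V: "(j, q) \<in> V \<Longrightarrow> inf_from V j q"
proof -
  assume V: "(j, q) \<in> V"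
  have "\<exists>u. reach V j q (j + k) u" for k
  proof (induction k)
    case 0 then show ?case using V reach.rrefl by auto
  next
    case (Suc k)
    then obtain u where u: "reach V j q (j + k) u" by blast
    then have uV: "(j + k, u) \<in> V" using reach_G by blast
    obtain u' where "u' \<in> trans A u (w (j + k))" using compl unfolding complete_def by blast
    then show ?case using u uV V_step reach.rstep by fastforce
  qed
  then show ?thesis using konig by blast
qed

end

context dag_g begin

definition h :: "nat \<Rightarrow> 'q \<Rightarrow> nat" where
  "h j q = (if q \<in> Sq j then rk j q else 0)"

lemma Sq_ne_all: "j0 \<le> j \<Longrightarrow> Sq j \<noteq> {}"
proof (induction j rule: dec_induct)
  case base then show ?case using Sq_ne .
next
  case (step n)
  then obtain q where "q \<in> Sq n" by blast
  moreover obtain q' where "q' \<in> trans A q (w n)" using compl unfolding complete_def by blast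
  ultimately show ?case by (auto simp: trans_set_def)
qed

lemma inV: "j0 \<le> j \<Longrightarrow> q \<in> Sq j \<Longrightarrow> (j, q) \<in> V"
  unfolding V_def by simp

lemma h_le: assumes "j0 \<le> j" shows "h j q \<le> 2 * card (UNIV :: 'q set)"
proof (cases "q \<in> Sq j")
  case True
  then have "rk j q \<le> g j q" using rk_le_g inV assms by blast
  then show ?thesis using g_bound[OF assms, of q] True by (simp add: h_def)
next
  case False then show ?thesis by (simp add: h_def)
qed

lemma h_le_rank: "h j q \<le> rank (h j)"
  unfolding rank_def by simp

lemma rank_attained: "j0 \<le> j \<Longrightarrow> \<exists>q\<in>Sq j. h j q = rank (h j)"
proof -
  assume j: "j0 \<le> j"
  have "rank (h j) \<in> range (h j)" unfolding rank_def by (rule Max_in) auto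
  then obtain q' where q': "h j q' = rank (h j)" by auto
  show ?thesis
  proof (cases "q' \<in> Sq j")
    case True then show ?thesis using q' by blast
  next
    case False
    then have "rank (h j) = 0" using q' unfolding h_def by simp
    moreover obtain q where "q \<in> Sq j" using Sq_ne_all j by blast
    ultimately show ?thesis using h_le_rank[of j q] by auto
  qed
qed

lemma rank_anti: "j0 \<le> j \<Longrightarrow> rank (h (Suc j)) \<le> rank (h j)"
proof -
  assume j: "j0 \<le> j"
  have "h (Suc j) q \<le> rank (h j)" for q
  proof (cases "q \<in> Sq (Suc j)")
    case True
    then obtain p where p: "p \<in> Sq j" "q \<in> trans A p (w j)" by (auto simp: trans_set_def)
    then have "rk (Suc j) q \<le> rk j p" using rk_mono inV j by blast
    also have "\<dots> = h j p" using p unfolding h_def by simp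
    also have "\<dots> \<le> rank (h j)" by (rule h_le_rank)
    finally show ?thesis using True unfolding h_def by simp
  next
    case False then show ?thesis unfolding h_def by simp
  qed
  then show ?thesis unfolding rank_def by (simp add: Max_le_iff)
qed

lemma rank_anti_le: assumes "j0 \<le> j" "j \<le> j'" shows "rank (h j') \<le> rank (h j)"
  using assms(2)
proof (induction j' rule: dec_induct)
  case base then show ?case by simp
next
  case (step n) then show ?case using rank_anti[of n] assms(1) by simp
qed

lemma stabilize: "\<exists>J\<ge>j0. \<forall>j\<ge>J. rank (h j) = rank (h J)"
proof -
  obtain J where J: "j0 \<le> J" "\<forall>y. j0 \<le> y \<longrightarrow> rank (h J) \<le> rank (h y)"
    using ex_has_least_nat[of "\<lambda>j. j0 \<le> j" j0 "\<lambda>j. rank (h j)"] by blast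
  have "\<forall>j\<ge>J. rank (h j) = rank (h J)"
  proof (intro allI impI)
    fix j assume "J \<le> j"
    then have "j0 \<le> j" using J(1) by simp
    then have "rank (h J) \<le> rank (h j)" using J(2) by blast
    then show "rank (h j) = rank (h J)" using rank_anti_le[OF J(1) \<open>J \<le> j\<close>] by simp
  qed
  then show ?thesis using J by blast
qed

lemma r_odd:
  assumes J: "j0 \<le> J" "\<forall>j\<ge>J. rank (h j) = rank (h J)"
  shows "odd (rank (h J))"
proof (rule ccontr)
  define r where "r = rank (h J)"
  assume "\<not> odd (rank (h J))"
  then have ev: "even r" unfolding r_def by simp
  define Rr where "Rr = {(l, u). (l, u) \<in> V \<and> J \<le> l \<and> rk l u = r}"
  have chain: "\<exists>x. reach Rr J x (J + k) u" if "u \<in> Sq (J + k)" "rk (J + k) u = r" for k u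
    using that
  proof (induction k arbitrary: u)
    case 0
    then have "(J, u) \<in> Rr" using inV[OF J(1)] unfolding Rr_def by simp
    then have "reach Rr J u J u" by (rule reach.rrefl)
    then show ?case by auto
  next
    case (Suc k)
    obtain p where p: "p \<in> Sq (J + k)" "u \<in> trans A p (w (J + k))" using Suc.prems(1) by (auto simp: trans_set_def)
    have pV: "(J + k, p) \<in> V" using inV p J(1) by simp
    have "r \<le> rk (J + k) p" using rk_mono[OF pV p(2)] Suc.prems by simp
    moreover have "rk (J + k) p \<le> r"
    proof -
      have "h (J + k) p \<le> rank (h (J + k))" by (rule h_le_rank)
      moreover have "rank (h (J + k)) = r" using J(2)[rule_format, of "J + k"] unfolding r_def by simp
      moreover have "h (J + k) p = rk (J + k) p" using p(1) by (simp add: h_def)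
      ultimately show ?thesis by simp
    qed
    ultimately have "rk (J + k) p = r" by simp
    then obtain x where "reach Rr J x (J + k) p" using Suc.IH p by blast
    moreover have "(Suc (J + k), u) \<in> Rr"
    proof -
      have "(Suc (J + k), u) \<in> V" using V_step[OF pV p(2)] .
      moreover have "rk (Suc (J + k)) u = r" using Suc.prems(2) by simp
      ultimately show ?thesis unfolding Rr_def by simp
    qed
    ultimately have "reach Rr J x (Suc (J + k)) u" using p(2) reach.rstep by blast
    then show ?case by auto
  qed
  have "\<forall>k. \<exists>x. \<exists>u. reach Rr J x (J + k) u"
  proof
    fix k
    obtain u where "u \<in> Sq (J + k)" "h (J + k) u = rank (h (J + k))" using rank_attained[of "J + k"] J(1) by auto
    moreover have "rank (h (J + k)) = r" using J(2)[rule_format, of "J + k"] unfolding r_def by simp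
    ultimately have "u \<in> Sq (J + k)" "rk (J + k) u = r" unfolding h_def by auto
    then show "\<exists>x u. reach Rr J x (J + k) u" using chain by blast
  qed
  moreover have "\<exists>u. reach Rr J x (J + k) u" if hh: "\<exists>u. reach Rr J x (J + k') u" "k \<le> k'" for k k' x
  proof -
    obtain u where "reach Rr J x (J + k') u" using hh by blast
    then show ?thesis using reach_trunc[of Rr J x "J + k'" u "J + k"] hh(2) by simp
  qed
  ultimately obtain x where "\<forall>k. \<exists>u. reach Rr J x (J + k) u"
    using pigeon_anti[where P="\<lambda>k x. \<exists>u. reach Rr J x (J + k) u"] by blast
  then have inf: "inf_from Rr J x" by (rule konig)
  obtain u0 where "reach Rr J x (J + 0) u0" using \<open>\<forall>k. \<exists>u. reach Rr J x (J + k) u\<close> by blast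
  then have xR: "(J, x) \<in> Rr" using reach_G by blast
  have sub: "Rr \<subseteq> Gs r" using Gs_iff unfolding Rr_def by auto
  obtain \<pi> where "\<pi> 0 = x" "ipath Rr J \<pi>" using inf unfolding inf_from_def by blast
  then have "inf_from (Gs r) J x" using ipath_mono[OF _ sub] unfolding inf_from_def by blast
  moreover have "(J, x) \<in> Gs r" using xR sub by blast
  ultimately have "(J, x) \<in> Gs (Suc r)" using ev by simp
  moreover have "(J, x) \<in> V" "rk J x = r" using xR unfolding Rr_def by auto
  ultimately have "Suc r \<le> rk J x" using Gs_iff by blast
  then show False using \<open>rk J x = r\<close> by simp
qed

lemma odd_appear:
  assumes J: "j0 \<le> J" "\<forall>j\<ge>J. rank (h j) = rank (h J)"
  and k: "odd k" "k \<le> rank (h J)"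
  shows "\<exists>L. \<forall>l\<ge>L. \<exists>u\<in>Sq l. rk l u = k"
proof -
  obtain x where x: "x \<in> Sq J" "h J x = rank (h J)" using rank_attained J by blast
  have xV: "(J, x) \<in> V" using inV[OF J(1) x(1)] .
  have "rk J x = rank (h J)" using x unfolding h_def by simp
  then have "(J, x) \<in> Gs k" using Gs_iff[OF xV] k by simp
  then obtain l u where lu: "reach (Gs k) J x l u" "rk l u = k" using find_odd k by blast
  have luV: "(l, u) \<in> V" using reach_G[OF lu(1)] Gs_V by blast
  have "\<exists>u'\<in>Sq (l + d). rk (l + d) u' = k" for d
  proof (induction d)
    case 0
    have "u \<in> Sq l" using luV by (simp add: V_def)
    then show ?case using lu(2) by auto
  next
    case (Suc d)
    obtain u' where u': "u' \<in> Sq (l + d)" "rk (l + d) u' = k" using Suc.IH by blast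
    have u'V: "(l + d, u') \<in> V" using u'(1) luV by (simp add: V_def)
    obtain u'' where "u'' \<in> trans A u' (w (l + d))" "rk (Suc (l + d)) u'' = k"
      using rk_odd_persist[OF u'V] u'(2) k(1) by auto
    moreover have "(Suc (l + d), u'') \<in> V" using V_step[OF u'V] calculation(1) by blast
    then have "u'' \<in> Sq (l + Suc d)" by (simp add: V_def)
    ultimately show ?case by auto
  qed
  then have "\<forall>l'\<ge>l. \<exists>u\<in>Sq l'. rk l' u = k"
  proof (intro allI impI)
    fix l' assume "l \<le> l'"
    then obtain d where "l' = l + d" using le_Suc_ex by blast
    then show "\<exists>u\<in>Sq l'. rk l' u = k" using \<open>\<And>d. \<exists>u'\<in>Sq (l + d). rk (l + d) u' = k\<close> by blast
  qed
  then show ?thesis by blast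
qed

lemma odd_appear_all:
  assumes J: "j0 \<le> J" "\<forall>j\<ge>J. rank (h j) = rank (h J)"
  shows "\<exists>L\<ge>J. \<forall>l\<ge>L. \<forall>k. odd k \<and> k \<le> rank (h J) \<longrightarrow> (\<exists>u\<in>Sq l. rk l u = k)"
proof -
  have "\<exists>L\<ge>J. \<forall>l\<ge>L. \<forall>k\<le>b. odd k \<and> k \<le> rank (h J) \<longrightarrow> (\<exists>u\<in>Sq l. rk l u = k)" for b
  proof (induction b)
    case 0 then show ?case by auto
  next
    case (Suc b)
    then obtain L where L: "L \<ge> J" "\<forall>l\<ge>L. \<forall>k\<le>b. odd k \<and> k \<le> rank (h J) \<longrightarrow> (\<exists>u\<in>Sq l. rk l u = k)"
      by blast
    show ?case
    proof (cases "odd (Suc b) \<and> Suc b \<le> rank (h J)")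
      case True
      then obtain L' where L': "\<forall>l\<ge>L'. \<exists>u\<in>Sq l. rk l u = Suc b" using odd_appear[OF J] by blast
      have "\<forall>l\<ge>max L L'. \<forall>k\<le>Suc b. odd k \<and> k \<le> rank (h J) \<longrightarrow> (\<exists>u\<in>Sq l. rk l u = k)"
      proof (intro allI impI)
        fix l k assume a: "max L L' \<le> l" "k \<le> Suc b" "odd k \<and> k \<le> rank (h J)"
        show "\<exists>u\<in>Sq l. rk l u = k"
        proof (cases "k = Suc b")
          case True then show ?thesis using L' a by simp
        next
          case False then have "k \<le> b" using a by simp
          then show ?thesis using L(2) a by simp
        qed
      qed
      moreover have "J \<le> max L L'" using L(1) by simp
      ultimately show ?thesis by blast
    next
      case False
      have "\<forall>l\<ge>L. \<forall>k\<le>Suc b. odd k \<and> k \<le> rank (h J) \<longrightarrow> (\<exists>u\<in>Sq l. rk l u = k)"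
      proof (intro allI impI)
        fix l k assume a: "L \<le> l" "k \<le> Suc b" "odd k \<and> k \<le> rank (h J)"
        then have "k \<noteq> Suc b" using False by auto
        then have "k \<le> b" using a by simp
        then show "\<exists>u\<in>Sq l. rk l u = k" using L(2) a by simp
      qed
      then show ?thesis using L(1) by blast
    qed
  qed
  then show ?thesis by blast
qed

lemma is_ranking_h: "j0 \<le> j \<Longrightarrow> is_ranking A (h j)"
  unfolding is_ranking_def using h_le rk_acc_even inV unfolding h_def by auto

end

definition win :: "('q, 'a) ba \<Rightarrow> ('q \<Rightarrow> 'q \<times> 'a \<times> 'q \<Rightarrow> 'q) \<Rightarrow> 'q \<Rightarrow> 'q \<Rightarrow> bool" where
  "win A \<sigma> p r \<longleftrightarrow> valid_strategy A \<sigma> \<and>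
     (\<forall>\<alpha> ps. is_run A p \<alpha> ps \<longrightarrow>
           (\<forall>i. ps i \<in> acc A \<longrightarrow> (\<exists>k\<ge>i. dup_play \<sigma> r \<alpha> ps k \<in> acc A)))"

lemma de_sim_win: "de_sim A p r \<longleftrightarrow> (\<exists>\<sigma>. win A \<sigma> p r)"
  unfolding de_sim_def win_def by blast

lemma dup_shift:
  "dup_play \<sigma> r (case_nat a \<alpha>) (case_nat p ps) (Suc k) = dup_play \<sigma> (\<sigma> r (p, a, ps 0)) \<alpha> ps k"
  by (induction k) auto

lemma win_step:
  assumes w: "win A \<sigma> p r" and t: "p' \<in> trans A p a"
  shows "win A \<sigma> p' (\<sigma> r (p, a, p'))"
  unfolding win_def
proof (intro conjI allI impI)
  show "valid_strategy A \<sigma>" using w unfolding win_def by blast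
next
  fix \<alpha> ps i
  assume run: "is_run A p' \<alpha> ps" and F: "ps i \<in> acc A"
  define \<alpha>' where "\<alpha>' = case_nat a \<alpha>"
  define ps' where "ps' = case_nat p ps"
  have "is_run A p \<alpha>' ps'"
    unfolding is_run_def
  proof (intro conjI allI)
    show "ps' 0 = p" unfolding ps'_def by simp
    fix i show "ps' (Suc i) \<in> trans A (ps' i) (\<alpha>' i)"
      using run t unfolding is_run_def ps'_def \<alpha>'_def by (cases i) auto
  qed
  moreover have "ps' (Suc i) \<in> acc A" using F unfolding ps'_def by simp
  ultimately obtain k where k: "k \<ge> Suc i" "dup_play \<sigma> r \<alpha>' ps' k \<in> acc A"
    using w unfolding win_def by blast
  then obtain k' where k': "k = Suc k'" by (cases k) auto
  have "dup_play \<sigma> r \<alpha>' ps' k = dup_play \<sigma> (\<sigma> r (p, a, p')) \<alpha> ps k'"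
    unfolding k' \<alpha>'_def ps'_def dup_shift using run unfolding is_run_def by simp
  then show "\<exists>k\<ge>i. dup_play \<sigma> (\<sigma> r (p, a, p')) \<alpha> ps k \<in> acc A"
    using k k' by auto
qed

lemma win_play:
  assumes w: "win A \<sigma> p r" and run: "is_run A p \<alpha> ps"
  shows "win A \<sigma> (ps t) (dup_play \<sigma> r \<alpha> ps t)"
proof (induction t)
  case 0 then show ?case using w run unfolding is_run_def by simp
next
  case (Suc t)
  have "ps (Suc t) \<in> trans A (ps t) (\<alpha> t)" using run unfolding is_run_def by blast
  from win_step[OF Suc this] show ?case by simp
qed

lemma valid_play:
  assumes "valid_strategy A \<sigma>" and run: "is_run A p \<alpha> ps"
  shows "dup_play \<sigma> r \<alpha> ps (Suc t) \<in> trans A (dup_play \<sigma> r \<alpha> ps t) (\<alpha> t)"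
  using assms unfolding valid_strategy_def is_run_def by simp

context dag_g begin

lemma de_rank:
  "j0 \<le> j \<Longrightarrow> p \<in> Sq j \<Longrightarrow> q \<in> Sq j \<Longrightarrow> de_sim A p q \<Longrightarrow> 2 * m + 1 \<le> rk j p \<Longrightarrow> 2 * m + 1 \<le> rk j q"
proof (induction m arbitrary: j p q)
  case 0
  have qV: "(j, q) \<in> V" using inV 0 by blast
  then have "(j, q) \<in> Gs 1" using inf_V[OF qV] by simp
  then have "1 \<le> rk j q" using Gs_iff[OF qV, of 1] by blast
  then show ?case by simp
next
  case (Suc m)
  define a where "a = 2 * m + 1"
  define b where "b = Suc a"
  define c where "c = Suc b"
  have ao: "odd a" and be: "even b" unfolding a_def b_def by simp_all
  have pV: "(j, p) \<in> V" and qV: "(j, q) \<in> V" using inV Suc.prems by blast+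
  have "c \<le> rk j p" using Suc.prems(5) unfolding a_def b_def c_def by simp
  then have pc: "(j, p) \<in> Gs c" using Gs_iff[OF pV] by blast
  show ?case
  proof (rule ccontr)
    assume "\<not> 2 * Suc m + 1 \<le> rk j q"
    then have "\<not> c \<le> rk j q" unfolding a_def b_def c_def by simp
    then have qc: "(j, q) \<notin> Gs c" using Gs_iff[OF qV] by blast
    have "\<exists>T. \<forall>u. \<not> reach (Gs b) j q (j + T) u"
    proof (rule ccontr)
      assume "\<not> ?thesis"
      then have all: "\<forall>T. \<exists>u. reach (Gs b) j q (j + T) u" by blast
      then have "inf_from (Gs b) j q" by (rule konig)
      moreover obtain u where "reach (Gs b) j q (j + 0) u" using all by blast
      then have "(j, q) \<in> Gs b" using reach_G by blast
      ultimately have "(j, q) \<in> Gs c" using be unfolding c_def by simp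
      then show False using qc by simp
    qed
    then obtain T where T: "\<And>u. \<not> reach (Gs b) j q (j + T) u" by blast
    have desc: "rk l u \<le> a" if r: "reach V j q l u" and l: "j + T \<le> l" for l u
    proof (rule ccontr)
      assume "\<not> rk l u \<le> a"
      moreover have "(l, u) \<in> V" using reach_G[OF r] by blast
      ultimately have "b \<le> rk l u" unfolding b_def by simp
      then have "(l, u) \<in> Gs b" using Gs_iff \<open>(l, u) \<in> V\<close> by blast
      then have "reach (Gs b) j q l u" using reach_V_Gs r by blast
      then obtain u' where "reach (Gs b) j q (j + T) u'" using reach_trunc[of "Gs b" j q l u "j + T"] l by auto
      then show False using T by blast
    qed
    obtain \<pi>1 where \<pi>1: "\<pi>1 0 = p" "ipath (Gs c) j \<pi>1"
      using odd_inf[of c] pc unfolding c_def b_def a_def inf_from_def by auto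
    define v where "v = \<pi>1 T"
    have r1: "reach (Gs c) j p (j + T) v" using ipath_reach[OF \<pi>1(2), of T] \<pi>1(1) v_def by simp
    have "(j + T, v) \<in> Gs b" using reach_G[OF r1] Gs_Suc_sub unfolding c_def by blast
    then have "\<not> Ffree (Gs a) (j + T) v" using ao unfolding b_def by simp
    then obtain l u where r2: "reach (Gs a) (j + T) v l u" and uF: "u \<in> acc A"
      unfolding Ffree_def by blast
    have subca: "Gs c \<subseteq> Gs a" by (rule Gs_anti) (simp add: c_def b_def)
    have r12: "reach (Gs a) j p l u" using reach_trans[OF r2 reach_mono[OF r1 subca]] .
    have lT: "j + T \<le> l" using reach_G[OF r2] by simp
    have "(l, u) \<in> Gs a" using reach_G[OF r2] by simp
    then obtain \<pi>2 where \<pi>2: "\<pi>2 0 = u" "ipath (Gs a) l \<pi>2"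
      using odd_inf[OF ao] unfolding inf_from_def by blast
    obtain \<pi> where \<pi>: "\<pi> 0 = p" "ipath (Gs a) j \<pi>" "\<forall>k. \<pi> (l - j + k) = \<pi>2 k"
      using reach_ipath_concat[OF r12 \<pi>2(2) \<pi>2(1)] by blast
    define i where "i = l - j"
    have "\<pi> (l - j + 0) = \<pi>2 0" using \<pi>(3) by blast
    then have \<pi>iF: "\<pi> i \<in> acc A" using \<pi>2(1) uF unfolding i_def by simp
    have iT: "T \<le> i" using lT unfolding i_def by simp
    define \<alpha> where "\<alpha> = (\<lambda>k. w (j + k))"
    have run: "is_run A p \<alpha> \<pi>" using \<pi>(1,2) unfolding is_run_def ipath_def \<alpha>_def by simp
    obtain \<sigma> where \<sigma>: "win A \<sigma> p q" using Suc.prems(4) unfolding de_sim_win by blast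
    define r where "r = dup_play \<sigma> q \<alpha> \<pi>"
    have val: "valid_strategy A \<sigma>" using \<sigma> unfolding win_def by blast
    have rreach: "reach V j q (j + k) (r k)" for k
    proof (induction k)
      case 0 then show ?case using qV reach.rrefl unfolding r_def by simp
    next
      case (Suc k)
      have t: "r (Suc k) \<in> trans A (r k) (w (j + k))"
        using valid_play[OF val run] unfolding r_def \<alpha>_def by simp
      have "(j + k, r k) \<in> V" using reach_G[OF Suc] by blast
      then have "(Suc (j + k), r (Suc k)) \<in> V" using V_step t by blast
      then show ?case using reach.rstep[OF Suc t] by simp
    qed
    have rnF: "r k \<notin> acc A" if "T \<le> k" for k
    proof -
      have wk: "win A \<sigma> (\<pi> k) (r k)" using win_play[OF \<sigma> run] unfolding r_def by blast
      have \<pi>k: "(j + k, \<pi> k) \<in> Gs a" using \<pi>(2) unfolding ipath_def by blast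
      then have \<pi>kV: "(j + k, \<pi> k) \<in> V" using Gs_V by blast
      have rkV: "(j + k, r k) \<in> V" using reach_G[OF rreach[of k]] by blast
      have "a \<le> rk (j + k) (\<pi> k)" using Gs_iff[OF \<pi>kV] \<pi>k by blast
      then have "2 * m + 1 \<le> rk (j + k) (\<pi> k)" unfolding a_def .
      moreover have "de_sim A (\<pi> k) (r k)" unfolding de_sim_win using wk by blast
      ultimately have "2 * m + 1 \<le> rk (j + k) (r k)"
        using Suc.IH[of "j + k" "\<pi> k" "r k"] \<pi>kV rkV Suc.prems(1) unfolding V_def by simp
      moreover have "rk (j + k) (r k) \<le> a" using desc[OF rreach[of k]] that by simp
      ultimately have eq: "rk (j + k) (r k) = a" unfolding a_def by simp
      have "(j + k, r k) \<in> Gs a" using Gs_iff[OF rkV, of a] eq by simp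
      moreover have "\<not> Suc a \<le> rk (j + k) (r k)" using eq by simp
      then have "(j + k, r k) \<notin> Gs (Suc a)" using Gs_iff[OF rkV, of "Suc a"] by blast
      ultimately have "(j + k, r k) \<in> Gs a" "(j + k, r k) \<notin> Gs (Suc a)" by blast+
      then have "Ffree (Gs a) (j + k) (r k)" using ao by simp
      then show ?thesis using reach.rrefl[OF \<open>(j + k, r k) \<in> Gs a\<close>] unfolding Ffree_def by blast
    qed
    obtain k where "k \<ge> i" "r k \<in> acc A" using \<sigma> run \<pi>iF unfolding win_def r_def by blast
    then show False using rnF iT by simp
  qed
qed

lemma de_ceil:
  assumes "j0 \<le> j" "p \<in> Sq j" "q \<in> Sq j" "de_sim A p q"
  shows "rk j p \<le> ceil_even (rk j q)"
proof (cases "rk j p = 0")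
  case True then show ?thesis by simp
next
  case False
  define m where "m = (rk j p - 1) div 2"
  have m1: "2 * m + 1 \<le> rk j p" and m2: "rk j p \<le> 2 * m + 2" using False unfolding m_def by auto
  have "2 * m + 1 \<le> rk j q" using de_rank[OF assms m1] .
  then have "2 * m + 2 \<le> ceil_even (rk j q)"
  proof (cases "even (rk j q)")
    case True
    then obtain t where t: "rk j q = 2 * t" by (auto elim: evenE)
    then have "2 * m + 1 \<le> 2 * t" using \<open>2 * m + 1 \<le> rk j q\<close> by simp
    then have "m < t" by simp
    then have "2 * m + 2 \<le> 2 * t" by simp
    then show ?thesis using True t unfolding ceil_even_def by simp
  next
    case False
    then show ?thesis using \<open>2 * m + 1 \<le> rk j q\<close> unfolding ceil_even_def by simp
  qed
  then show ?thesis using m2 by simp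
qed

end

lemma tight_UNIV: "tight S f \<Longrightarrow> tight UNIV f"
  unfolding tight_def by blast

lemma even_le_pred: "even (i::nat) \<Longrightarrow> i < 2 * n \<Longrightarrow> i \<le> 2 * n - 2"
  by (auto elim!: evenE)

context dag_g begin

lemma rank_h_bound: assumes "j0 \<le> j" shows "rank (h j) \<le> 2 * card (UNIV :: 'q set)"
proof -
  obtain q where "h j q = rank (h j)" using rank_attained[OF assms] by blast
  then show ?thesis using h_le[OF assms, of q] by simp
qed

lemma exists_N: "\<exists>r N. j0 < N \<and> (\<forall>j\<ge>N. tight (Sq j) (h j) \<and> rank (h j) = r)"
proof -
  obtain J where J: "j0 \<le> J" "\<forall>j\<ge>J. rank (h j) = rank (h J)" using stabilize by blast
  have ro: "odd (rank (h J))" using r_odd[OF J] .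
  obtain L where L: "L \<ge> J" "\<forall>l\<ge>L. \<forall>k. odd k \<and> k \<le> rank (h J) \<longrightarrow> (\<exists>u\<in>Sq l. rk l u = k)"
    using odd_appear_all[OF J] by blast
  have "tight (Sq j) (h j) \<and> rank (h j) = rank (h J)" if "Suc L \<le> j" for j
  proof -
    have "J \<le> j" using that L(1) by simp
    then have rj: "rank (h j) = rank (h J)" using J(2) by blast
    have "\<forall>k. odd k \<and> k \<le> rank (h j) \<longrightarrow> k \<in> h j ` Sq j"
    proof (intro allI impI)
      fix k assume "odd k \<and> k \<le> rank (h j)"
      moreover have "L \<le> j" using that by simp
      ultimately obtain u where "u \<in> Sq j" "rk j u = k" using L(2) rj by auto
      then show "k \<in> h j ` Sq j" unfolding h_def by force
    qed
    moreover have "\<forall>q. q \<notin> Sq j \<longrightarrow> h j q = 0" unfolding h_def by simp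
    ultimately show ?thesis unfolding tight_def using ro rj by simp
  qed
  moreover have "j0 < Suc L" using J(1) L(1) by simp
  ultimately show ?thesis by blast
qed

end

locale dag_run = dag_g A w j0 g for A :: "('q::finite, 'a) ba" and w j0 g +
  fixes r N :: nat
  assumes N0: "j0 < N"
  and tN: "\<And>j. N \<le> j \<Longrightarrow> tight (Sq j) (h j)"
  and rN: "\<And>j. N \<le> j \<Longrightarrow> rank (h j) = r"
begin

fun obstep :: "nat \<Rightarrow> 'q set \<times> nat \<Rightarrow> 'q set \<times> nat" where
  "obstep l (Ob, i) = (if Ob = {} then (Sq (Suc l) \<inter> h (Suc l) -` {(i + 2) mod (r + 1)}, (i + 2) mod (r + 1))
                      else (trans_set A Ob (w l) \<inter> h (Suc l) -` {i}, i))"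

primrec obi :: "nat \<Rightarrow> 'q set \<times> nat" where
  "obi 0 = ({}, 0)"
| "obi (Suc k) = obstep (N + k) (obi k)"

definition run' :: "nat \<Rightarrow> 'q sstate" where
  "run' j = (if j < N then Q1st (Sq j) else Q2st (Sq j) (fst (obi (j - N))) (h j) (snd (obi (j - N))))"

lemma r_odd': "odd r"
  using tN[of N] rN[of N] unfolding tight_def by simp

lemma obi_inv: "fst (obi k) \<subseteq> Sq (N + k) \<inter> h (N + k) -` {snd (obi k)} \<and> even (snd (obi k)) \<and> snd (obi k) < r"
proof (induction k)
  case 0 then show ?case using r_odd' by (simp add: odd_pos)
next
  case (Suc k)
  obtain Ob i where oi: "obi k = (Ob, i)" by fastforce
  show ?case
  proof (cases "Ob = {}")
    case True
    define i' where "i' = (i + 2) mod (r + 1)"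
    have "even i'" unfolding i'_def using Suc oi r_odd' by (simp add: dvd_mod_iff)
    moreover have "i' < r + 1" unfolding i'_def by simp
    ultimately have "i' < r" using r_odd' by (metis less_SucE Suc_eq_plus1)
    then show ?thesis using oi True \<open>even i'\<close> unfolding i'_def by auto
  next
    case False
    have "Ob \<subseteq> Sq (N + k)" using Suc oi by simp
    then have "trans_set A Ob (w (N + k)) \<subseteq> Sq (Suc (N + k))" by (auto simp: trans_set_def)
    then show ?thesis using oi False Suc by auto
  qed
qed

lemma in_Q2_de:
  assumes j: "N \<le> j"
  shows "(Sq j, fst (obi (j - N)), h j, snd (obi (j - N))) \<in> Q2_de A"
proof -
  define Ob where "Ob = fst (obi (j - N))"
  define i where "i = snd (obi (j - N))"
  have inv: "Ob \<subseteq> Sq j \<inter> h j -` {i}" "even i" "i < r"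
    using obi_inv[of "j - N"] j unfolding Ob_def i_def by auto
  have j0j: "j0 \<le> j" using j N0 by simp
  have "h j \<in> tight_rankings A"
    unfolding tight_rankings_def using is_ranking_h[OF j0j] tight_UNIV[OF tN[OF j]] by simp
  moreover have "i \<le> 2 * card (UNIV :: 'q set) - 2"
  proof -
    have "r \<le> 2 * card (UNIV :: 'q set)" using rank_h_bound[OF j0j] rN[OF j] by simp
    then show ?thesis using inv(2,3) even_le_pred by simp
  qed
  ultimately have "(Sq j, Ob, h j, i) \<in> Q2 A" unfolding Q2_def using inv tN[OF j] by auto
  moreover have "\<not> (\<exists>p\<in>Sq j. \<exists>q\<in>Sq j. de_sim A p q \<and> h j p > ceil_even (h j q))"
    using de_ceil[OF j0j] unfolding h_def by (simp add: not_less)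
  ultimately show ?thesis unfolding Q2_de_def Ob_def i_def by blast
qed

lemma run'_trans: "run' (Suc j) \<in> schewe_trans A (Q2_de A) (run' j) (w j)"
proof (cases "Suc j < N")
  case True
  then show ?thesis unfolding run'_def schewe_trans_def by simp
next
  case False
  show ?thesis
  proof (cases "Suc j = N")
    case True
    then have "run' j = Q1st (Sq j)" "run' (Suc j) = Q2st (Sq (Suc j)) {} (h (Suc j)) 0"
      unfolding run'_def by simp_all
    moreover have "(Sq (Suc j), {}, h (Suc j), 0) \<in> Q2_de A"
      using in_Q2_de[of "Suc j"] True by simp
    moreover have "tight (Sq (Suc j)) (h (Suc j))" using tN True by simp
    ultimately show ?thesis unfolding schewe_trans_def by auto
  next
    case False
    then have jN: "N \<le> j" using \<open>\<not> Suc j < N\<close> by simp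
    define k where "k = j - N"
    obtain Ob i where oi: "obi k = (Ob, i)" by fastforce
    have j0j: "j0 \<le> j" using jN N0 by simp
    have rj: "run' j = Q2st (Sq j) Ob (h j) i" unfolding run'_def using jN oi k_def by simp
    have sk: "Suc j - N = Suc k" using jN k_def by simp
    have nk: "N + k = j" using jN k_def by simp
    have rsj: "run' (Suc j) = Q2st (Sq (Suc j)) (fst (obstep j (Ob, i))) (h (Suc j)) (snd (obstep j (Ob, i)))"
      unfolding run'_def using jN sk nk oi by simp
    have mem: "(Sq (Suc j), fst (obstep j (Ob, i)), h (Suc j), snd (obstep j (Ob, i))) \<in> Q2_de A"
      using in_Q2_de[of "Suc j"] jN sk nk oi by simp
    have mono: "\<forall>q\<in>Sq j. \<forall>q'\<in>trans A q (w j). h (Suc j) q' \<le> h j q"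
    proof (intro ballI)
      fix q q' assume q: "q \<in> Sq j" and q': "q' \<in> trans A q (w j)"
      have "q' \<in> Sq (Suc j)" using q q' by (auto simp: trans_set_def)
      then show "h (Suc j) q' \<le> h j q" using rk_mono[OF inV[OF j0j q] q'] q unfolding h_def by simp
    qed
    have rk: "rank (h j) = rank (h (Suc j))" using rN jN by simp
    have ti: "tight (Sq (Suc j)) (h (Suc j))" using tN[of "Suc j"] jN by simp
    have rr: "rank (h (Suc j)) = r" using rN jN by simp
    show ?thesis
      unfolding rj rsj schewe_trans_def
      using mem mono rk ti rr by (cases "Ob = {}") auto
  qed
qed

lemma run'_is_run: "is_run (schewe_de A) (Q1st (init A)) w run'"
  unfolding is_run_def schewe_de_def schewe_gen_def
  using run'_trans N0 by (simp add: run'_def)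

lemma obi_empty_inf: "\<forall>K. \<exists>k\<ge>K. fst (obi k) = {}"
proof (rule ccontr)
  assume "\<not> ?thesis"
  then obtain K where K: "\<And>k. K \<le> k \<Longrightarrow> fst (obi k) \<noteq> {}" by auto
  define i0 where "i0 = snd (obi K)"
  have iconst: "snd (obi (K + d)) = i0" for d
  proof (induction d)
    case 0 then show ?case unfolding i0_def by simp
  next
    case (Suc d)
    obtain Ob i where oi: "obi (K + d) = (Ob, i)" by fastforce
    have "Ob \<noteq> {}" using K[of "K + d"] oi by simp
    then show ?case using Suc oi by simp
  qed
  have ostep: "fst (obi (K + Suc d)) = trans_set A (fst (obi (K + d))) (w (N + K + d)) \<inter> h (Suc (N + K + d)) -` {i0}" for d
  proof -
    obtain Ob i where oi: "obi (K + d) = (Ob, i)" by fastforce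
    have "Ob \<noteq> {}" using K[of "K + d"] oi by simp
    moreover have "i = i0" using iconst[of d] oi by simp
    ultimately show ?thesis using oi by (simp add: add.assoc)
  qed
  have ie: "even i0" using obi_inv[of K] unfolding i0_def by simp
  define Ri where "Ri = {(l, u). (l, u) \<in> V \<and> rk l u = i0}"
  have memRi: "(N + K + d, u) \<in> Ri" if "u \<in> fst (obi (K + d))" for d u
  proof -
    have "u \<in> Sq (N + (K + d))" "h (N + (K + d)) u = i0"
      using obi_inv[of "K + d"] that iconst[of d] by auto
    moreover have "j0 \<le> N + K + d" using N0 by simp
    ultimately show ?thesis unfolding Ri_def V_def h_def by (simp add: add.assoc)
  qed
  have chain: "\<exists>x\<in>fst (obi K). reach Ri (N + K) x (N + K + d) u" if "u \<in> fst (obi (K + d))" for d u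
    using that
  proof (induction d arbitrary: u)
    case 0
    have "(N + K + 0, u) \<in> Ri" using memRi[of u 0] 0 by simp
    then have "reach Ri (N + K) u (N + K) u" using reach.rrefl by simp
    then show ?case using 0 by auto
  next
    case (Suc d)
    then obtain p where p: "p \<in> fst (obi (K + d))" "u \<in> trans A p (w (N + K + d))"
      using ostep[of d] by (auto simp: trans_set_def)
    obtain x where x: "x \<in> fst (obi K)" "reach Ri (N + K) x (N + K + d) p" using Suc.IH p(1) by blast
    have "(N + K + Suc d, u) \<in> Ri" using memRi Suc.prems by blast
    then have "reach Ri (N + K) x (Suc (N + K + d)) u" using reach.rstep[OF x(2) p(2)] by simp
    then show ?case using x(1) by auto
  qed
  have "\<forall>d. \<exists>x. \<exists>u. reach Ri (N + K) x (N + K + d) u"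
  proof
    fix d
    obtain u where "u \<in> fst (obi (K + d))" using K[of "K + d"] by auto
    then show "\<exists>x u. reach Ri (N + K) x (N + K + d) u" using chain by blast
  qed
  moreover have "\<exists>u. reach Ri (N + K) x (N + K + d) u" if hh: "\<exists>u. reach Ri (N + K) x (N + K + d') u" "d \<le> d'" for d d' x
  proof -
    obtain u where "reach Ri (N + K) x (N + K + d') u" using hh by blast
    then show ?thesis using reach_trunc[of Ri "N + K" x "N + K + d'" u "N + K + d"] hh(2) by simp
  qed
  ultimately obtain x where xall: "\<forall>d. \<exists>u. reach Ri (N + K) x (N + K + d) u"
    using pigeon_anti[where P="\<lambda>d x. \<exists>u. reach Ri (N + K) x (N + K + d) u"] by blast
  then have inf: "inf_from Ri (N + K) x" by (rule konig)
  obtain u0 where "reach Ri (N + K) x (N + K + 0) u0" using xall by blast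
  then have xR: "(N + K, x) \<in> Ri" using reach_G by blast
  have sub: "Ri \<subseteq> Gs i0"
  proof
    fix v assume "v \<in> Ri"
    then obtain l u where v: "v = (l, u)" "(l, u) \<in> V" "rk l u = i0" unfolding Ri_def by auto
    then show "v \<in> Gs i0" using Gs_iff[OF v(2), of i0] by simp
  qed
  obtain \<pi> where "\<pi> 0 = x" "ipath Ri (N + K) \<pi>" using inf unfolding inf_from_def by blast
  then have "inf_from (Gs i0) (N + K) x" using ipath_mono[OF _ sub] unfolding inf_from_def by blast
  moreover have "(N + K, x) \<in> Gs i0" using xR sub by blast
  ultimately have "(N + K, x) \<in> Gs (Suc i0)" using ie by simp
  moreover have xV: "(N + K, x) \<in> V" and "rk (N + K) x = i0" using xR unfolding Ri_def by auto
  ultimately have "Suc i0 \<le> rk (N + K) x" using Gs_iff[OF xV] by blast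
  then show False using \<open>rk (N + K) x = i0\<close> by simp
qed

lemma finite_funs: "finite {f :: 'q \<Rightarrow> nat. \<forall>q. f q \<le> b}"
proof -
  have "{f :: 'q \<Rightarrow> nat. \<forall>q. f q \<le> b} = {f. \<forall>x. (x \<in> UNIV \<longrightarrow> f x \<in> {..b}) \<and> (x \<notin> UNIV \<longrightarrow> f x = 0)}"
    by auto
  then show ?thesis using finite_set_of_finite_funs[of "UNIV :: 'q set" "{..b}" 0] by simp
qed

lemma run'_accepting: "accepting_run (schewe_de A) run'"
proof -
  define E where "E = {j. N \<le> j \<and> fst (obi (j - N)) = {}}"
  have infE: "infinite E" unfolding infinite_nat_iff_unbounded_le
  proof
    fix m
    obtain k where "k \<ge> m" "fst (obi k) = {}" using obi_empty_inf by blast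
    then show "\<exists>n\<ge>m. n \<in> E" unfolding E_def by (intro exI[of _ "N + k"]) simp
  qed
  define b where "b = 2 * card (UNIV :: 'q set)"
  define Fs where "Fs = {f :: 'q \<Rightarrow> nat. \<forall>q. f q \<le> b}"
  have "run' ` E \<subseteq> (\<lambda>((S, f), i). Q2st S {} f i) ` ((UNIV \<times> Fs) \<times> {..b})"
  proof
    fix s assume "s \<in> run' ` E"
    then obtain j where j: "j \<in> E" "s = run' j" by blast
    have jN: "N \<le> j" and e: "fst (obi (j - N)) = {}" using j(1) unfolding E_def by auto
    have j0j: "j0 \<le> j" using jN N0 by simp
    have s: "s = Q2st (Sq j) {} (h j) (snd (obi (j - N)))" using j(2) jN e unfolding run'_def by simp
    have "h j \<in> Fs" unfolding Fs_def b_def using h_le[OF j0j] by blast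
    moreover have "snd (obi (j - N)) \<le> b"
      using obi_inv[of "j - N"] rank_h_bound[OF j0j] rN[OF jN] unfolding b_def by simp
    ultimately show "s \<in> (\<lambda>((S, f), i). Q2st S {} f i) ` ((UNIV \<times> Fs) \<times> {..b})"
      using s by force
  qed
  moreover have "finite ((\<lambda>((S, f), i). Q2st S {} f i) ` ((UNIV \<times> Fs) \<times> {..b}))"
    using finite_funs unfolding Fs_def by simp
  ultimately have "finite (run' ` E)" by (rule finite_subset)
  then obtain j where j: "j \<in> E" "infinite {a \<in> E. run' a = run' j}"
    using pigeonhole_infinite[OF infE] by blast
  have jN: "N \<le> j" and e: "fst (obi (j - N)) = {}" using j(1) unfolding E_def by auto
  have "run' j \<in> acc (schewe_de A)"
    using in_Q2_de[OF jN] e unfolding schewe_de_def schewe_gen_def run'_def using jN by auto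
  moreover have "infinite {i. run' i = run' j}"
    using j(2) by (rule infinite_super[rotated]) auto
  ultimately show ?thesis unfolding accepting_run_def by blast
qed

lemma w_in_de: "w \<in> lang (schewe_de A)"
  unfolding lang_def using run'_is_run run'_accepting
  by (auto simp: schewe_de_def schewe_gen_def)

end

fun isQ2 :: "'q sstate \<Rightarrow> bool" where
  "isQ2 (Q2st S Ob f i) = True"
| "isQ2 (Q1st S) = False"

fun FFs :: "'q sstate \<Rightarrow> 'q \<Rightarrow> nat" where
  "FFs (Q2st S Ob f i) = f"
| "FFs (Q1st S) = (\<lambda>_. 0)"

fun OOs :: "'q sstate \<Rightarrow> 'q set" where
  "OOs (Q2st S Ob f i) = Ob"
| "OOs (Q1st S) = {}"

fun IIs :: "'q sstate \<Rightarrow> nat" where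
  "IIs (Q2st S Ob f i) = i"
| "IIs (Q1st S) = 0"

lemma trans_sub: "schewe_trans A (Q2_de A) st a \<subseteq> schewe_trans A (Q2 A) st a"
  unfolding schewe_trans_def Q2_de_def by (cases st) auto

lemma lang_sub: "lang (schewe_de A) \<subseteq> lang (schewe A)"
proof
  fix w assume "w \<in> lang (schewe_de A)"
  then obtain \<rho> where run: "is_run (schewe_de A) (Q1st (init A)) w \<rho>" and acc: "accepting_run (schewe_de A) \<rho>"
    unfolding lang_def schewe_de_def schewe_gen_def by auto
  have "is_run (schewe A) (Q1st (init A)) w \<rho>"
  proof -
    have "\<rho> 0 = Q1st (init A)" "\<forall>i. \<rho> (Suc i) \<in> schewe_trans A (Q2_de A) (\<rho> i) (w i)"
      using run unfolding is_run_def schewe_de_def schewe_gen_def by simp_all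
    moreover have "\<rho> (Suc i) \<in> schewe_trans A (Q2 A) (\<rho> i) (w i)" for i
      using calculation(2) trans_sub[of A "\<rho> i" "w i"] by blast
    ultimately show ?thesis unfolding is_run_def schewe_def schewe_gen_def by simp
  qed
  moreover have "accepting_run (schewe A) \<rho>"
    using acc unfolding accepting_run_def schewe_de_def schewe_def schewe_gen_def Q2_de_def by auto
  ultimately show "w \<in> lang (schewe A)" unfolding lang_def schewe_def schewe_gen_def by auto
qed

locale brun = dag A w j0 for A :: "('q::finite, 'a) ba" and w j0 +
  fixes \<rho> :: "nat \<Rightarrow> 'q sstate"
  assumes run: "is_run (schewe A) (Q1st (init A)) w \<rho>"
  and accr: "accepting_run (schewe A) \<rho>"
  and compl: "complete A"
begin

definition Ff where "Ff j = FFs (\<rho> j)"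
definition Obs where "Obs j = OOs (\<rho> j)"
definition Ii where "Ii j = IIs (\<rho> j)"

lemma rstep: "\<rho> (Suc j) \<in> schewe_trans A (Q2 A) (\<rho> j) (w j)"
  using run unfolding is_run_def schewe_def schewe_gen_def by simp

lemma shape: "\<rho> j = Q1st (Sq j) \<or> (\<rho> j = Q2st (Sq j) (Obs j) (Ff j) (Ii j) \<and> (Sq j, Obs j, Ff j, Ii j) \<in> Q2 A)"
proof (induction j)
  case 0 then show ?case using run unfolding is_run_def by simp
next
  case (Suc j)
  have st: "\<rho> (Suc j) \<in> schewe_trans A (Q2 A) (\<rho> j) (w j)" by (rule rstep)
  from Suc show ?case
  proof
    assume h: "\<rho> j = Q1st (Sq j)"
    have "\<rho> (Suc j) \<in> schewe_trans A (Q2 A) (Q1st (Sq j)) (w j)" using st h by simp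
    then show ?thesis by (auto simp: schewe_trans_def Ff_def Obs_def Ii_def)
  next
    assume h: "\<rho> j = Q2st (Sq j) (Obs j) (Ff j) (Ii j) \<and> (Sq j, Obs j, Ff j, Ii j) \<in> Q2 A"
    have "\<rho> (Suc j) \<in> schewe_trans A (Q2 A) (Q2st (Sq j) (Obs j) (Ff j) (Ii j)) (w j)" using st h by simp
    then show ?thesis by (auto simp: schewe_trans_def Ff_def Obs_def Ii_def)
  qed
qed

lemma q2_shape: "isQ2 (\<rho> j) \<Longrightarrow> \<rho> j = Q2st (Sq j) (Obs j) (Ff j) (Ii j) \<and> (Sq j, Obs j, Ff j, Ii j) \<in> Q2 A"
  using shape[of j] by auto

lemma q2_persist: "isQ2 (\<rho> j) \<Longrightarrow> isQ2 (\<rho> (Suc j))"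
proof -
  assume "isQ2 (\<rho> j)"
  then have e: "\<rho> j = Q2st (Sq j) (Obs j) (Ff j) (Ii j)" using q2_shape by blast
  show ?thesis using rstep[of j] unfolding e schewe_trans_def by auto
qed

lemma q2_after: "isQ2 (\<rho> j) \<Longrightarrow> j \<le> l \<Longrightarrow> isQ2 (\<rho> l)"
proof -
  assume a: "isQ2 (\<rho> j)" "j \<le> l"
  show ?thesis using a(2)
  proof (induction l rule: dec_induct)
    case base then show ?case using a(1) .
  next
    case (step n) then show ?case using q2_persist by blast
  qed
qed

lemma q2_step:
  assumes "isQ2 (\<rho> j)"
  shows "(\<forall>q\<in>Sq j. \<forall>q'\<in>trans A q (w j). Ff (Suc j) q' \<le> Ff j q) \<and> rank (Ff j) = rank (Ff (Suc j))
    \<and> ((Obs j = {} \<and> Ii (Suc j) = (Ii j + 2) mod (rank (Ff (Suc j)) + 1) \<and> Obs (Suc j) = Sq (Suc j) \<inter> Ff (Suc j) -` {Ii (Suc j)})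
       \<or> (Obs j \<noteq> {} \<and> Ii (Suc j) = Ii j \<and> Obs (Suc j) = trans_set A (Obs j) (w j) \<inter> Ff (Suc j) -` {Ii j}))"
proof -
  have e: "\<rho> j = Q2st (Sq j) (Obs j) (Ff j) (Ii j)" using q2_shape assms by blast
  have "\<rho> (Suc j) \<in> schewe_trans A (Q2 A) (Q2st (Sq j) (Obs j) (Ff j) (Ii j)) (w j)"
    using rstep[of j] unfolding e .
  then obtain S' O' f' i' where
    r: "\<rho> (Suc j) = Q2st S' O' f' i'" and
    c: "(S', O', f', i') \<in> Q2 A" "S' = trans_set A (Sq j) (w j)"
       "(\<forall>q\<in>Sq j. \<forall>q'\<in>trans A q (w j). f' q' \<le> Ff j q)"
       "rank (Ff j) = rank f'" "tight S' f'"
       "((Obs j = {} \<and> i' = (Ii j + 2) mod (rank f' + 1) \<and> O' = S' \<inter> f' -` {i'})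
             \<or> (Obs j \<noteq> {} \<and> i' = Ii j \<and> O' = trans_set A (Obs j) (w j) \<inter> f' -` {Ii j}))"
    by (simp only: schewe_trans_def sstate.case mem_Collect_eq) blast
  have "Ff (Suc j) = f'" "Obs (Suc j) = O'" "Ii (Suc j) = i'" unfolding Ff_def Obs_def Ii_def r by simp_all
  then show ?thesis using c by simp
qed

lemma all_q1: "(\<forall>j. \<not> isQ2 (\<rho> j)) \<Longrightarrow> w \<in> lang (schewe_de A)"
proof -
  assume nq: "\<forall>j. \<not> isQ2 (\<rho> j)"
  have e: "\<rho> j = Q1st (Sq j)" for j
  proof -
    have "\<not> isQ2 (\<rho> j)" using nq by blast
    then show ?thesis using shape[of j] by auto
  qed
  have "is_run (schewe_de A) (Q1st (init A)) w \<rho>"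
    unfolding is_run_def schewe_de_def schewe_gen_def
    using e run unfolding is_run_def schewe_trans_def by simp
  moreover have "accepting_run (schewe_de A) \<rho>"
  proof -
    obtain s where s: "s \<in> acc (schewe A)" "infinite {i. \<rho> i = s}" using accr unfolding accepting_run_def by blast
    then obtain i where "\<rho> i = s" by (metis (mono_tags, lifting) empty_Collect_eq finite.emptyI)
    then have "s = Q1st (Sq i)" using e by simp
    then have "s = Q1st {}" using s(1) unfolding schewe_def schewe_gen_def by auto
    then have "s \<in> acc (schewe_de A)" unfolding schewe_de_def schewe_gen_def by simp
    then show ?thesis using s(2) unfolding accepting_run_def by blast
  qed
  ultimately show ?thesis unfolding lang_def schewe_de_def schewe_gen_def by auto
qed

end

context brun begin

lemma rank_const: "isQ2 (\<rho> j0) \<Longrightarrow> j0 \<le> l \<Longrightarrow> rank (Ff l) = rank (Ff j0)"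
proof -
  assume q: "isQ2 (\<rho> j0)" and jl: "j0 \<le> l"
  show ?thesis using jl
  proof (induction l rule: dec_induct)
    case base then show ?case by simp
  next
    case (step n)
    then show ?case using q2_step[OF q2_after[OF q step(1)]] by simp
  qed
qed

lemma g_path':
  assumes q0: "isQ2 (\<rho> j0)" and ip: "ipath V j \<pi>" and cst: "\<forall>k. Ff (j + k) (\<pi> k) = c"
  shows "odd c"
proof (rule ccontr)
  assume "\<not> odd c"
  then have ce: "even c" by simp
  have jj: "j0 \<le> j" using ip unfolding ipath_def V_def by (metis (mono_tags, lifting) add_0_right case_prodD mem_Collect_eq)
  have Q: "isQ2 (\<rho> l)" if "j0 \<le> l" for l using q2_after[OF q0 that] .
  define r0 where "r0 = rank (Ff j0)"
  have rc: "rank (Ff l) = r0" if "j0 \<le> l" for l using rank_const[OF q0 that] unfolding r0_def .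
  have r0o: "odd r0" using q2_shape[OF q0] unfolding r0_def Q2_def tight_def by auto
  have "c \<le> r0"
  proof -
    have "c = Ff j (\<pi> 0)" using cst[rule_format, of 0] by simp
    also have "\<dots> \<le> rank (Ff j)" unfolding rank_def by simp
    finally show ?thesis using rc[OF jj] by simp
  qed
  then have cr: "c < r0 + 1" by simp
  have empties: "\<exists>l\<ge>m. Obs l = {}" for m
  proof -
    obtain s where s: "s \<in> acc (schewe A)" "infinite {i. \<rho> i = s}" using accr unfolding accepting_run_def by blast
    then obtain l where l: "l \<ge> max m j0" "\<rho> l = s" unfolding infinite_nat_iff_unbounded_le by blast
    have ql: "isQ2 (\<rho> l)" using Q l(1) by simp
    have e: "\<rho> l = Q2st (Sq l) (Obs l) (Ff l) (Ii l)" using q2_shape[OF ql] by blast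
    then have "Obs l = {}" using s(1) l(2) unfolding schewe_def schewe_gen_def by auto
    then show ?thesis using l(1) by auto
  qed
  define T where "T l \<longleftrightarrow> j \<le> l \<and> Ii l = c \<and> \<pi> (l - j) \<in> Obs l" for l
  have Tstep: "T (Suc l)" if "T l" for l
  proof -
    have jl: "j \<le> l" "Ii l = c" "\<pi> (l - j) \<in> Obs l" using that unfolding T_def by auto
    then have ne: "Obs l \<noteq> {}" by auto
    have st: "Ii (Suc l) = Ii l" "Obs (Suc l) = trans_set A (Obs l) (w l) \<inter> Ff (Suc l) -` {Ii l}"
      using q2_step[OF Q[of l]] ne jj jl(1) by auto
    have "\<pi> (Suc (l - j)) \<in> trans A (\<pi> (l - j)) (w (j + (l - j)))" using ip unfolding ipath_def by blast
    then have t: "\<pi> (Suc l - j) \<in> trans A (\<pi> (l - j)) (w l)" using jl(1) by (simp add: Suc_diff_le)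
    have "Ff (j + (Suc l - j)) (\<pi> (Suc l - j)) = c" using cst by blast
    then have f: "Ff (Suc l) (\<pi> (Suc l - j)) = c" using jl(1) by simp
    have "\<pi> (Suc l - j) \<in> Obs (Suc l)" using st(2) t jl f unfolding trans_set_def by auto
    then show ?thesis unfolding T_def using st(1) jl by simp
  qed
  have Tforever: "T l'" if "T l" "l \<le> l'" for l l'
    using that(2)
  proof (induction l' rule: dec_induct)
    case base then show ?case using that(1) .
  next
    case (step n) then show ?case using Tstep by blast
  qed
  have noT: "\<not> T l" for l
  proof
    assume "T l"
    obtain l' where "l' \<ge> l" "Obs l' = {}" using empties by blast
    then show False using Tforever[OF \<open>T l\<close>] unfolding T_def by auto
  qed
  have emp_step: "Obs (Suc e) = Sq (Suc e) \<inter> Ff (Suc e) -` {Ii (Suc e)} \<and> Ii (Suc e) = (Ii e + 2) mod (r0 + 1)"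
    if "Obs e = {}" "j \<le> e" for e
    using q2_step[OF Q[of e]] that jj rc[of "Suc e"] by auto
  have next_e: "\<exists>e'>e. Obs e' = {} \<and> Ii (Suc e') = (Ii (Suc e) + 2) mod (r0 + 1)"
    if "Obs e = {}" "j \<le> e" for e
  proof -
    obtain e'' where "e'' \<ge> Suc e" "Obs e'' = {}" using empties by blast
    then have ex: "e < e'' \<and> Obs e'' = {}" by simp
    define e' where "e' = (LEAST l. e < l \<and> Obs l = {})"
    have e': "e < e'" "Obs e' = {}" using LeastI[of "\<lambda>l. e < l \<and> Obs l = {}", OF ex] unfolding e'_def by auto
    have ne: "Obs l \<noteq> {}" if "e < l" "l < e'" for l
      using not_less_Least[of l "\<lambda>l. e < l \<and> Obs l = {}"] that unfolding e'_def by blast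
    have keep: "Suc e + d \<le> e' \<Longrightarrow> Ii (Suc e + d) = Ii (Suc e)" for d
    proof (induction d)
      case 0 then show ?case by simp
    next
      case (Suc d)
      have "Obs (Suc e + d) \<noteq> {}" using ne Suc.prems by simp
      moreover have "j0 \<le> Suc e + d" using jj that(2) by simp
      ultimately have "Ii (Suc (Suc e + d)) = Ii (Suc e + d)" using q2_step[OF Q[of "Suc e + d"]] by auto
      then show ?case using Suc by simp
    qed
    have "Ii e' = Ii (Suc e)" using keep[of "e' - Suc e"] e'(1) by simp
    moreover have "Ii (Suc e') = (Ii e' + 2) mod (r0 + 1)" using emp_step[OF e'(2)] e'(1) that(2) by simp
    ultimately show ?thesis using e' by auto
  qed
  obtain e0 where e0: "e0 \<ge> j" "Obs e0 = {}" using empties by blast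
  define x where "x = Ii (Suc e0)"
  have iter: "\<exists>e\<ge>j. Obs e = {} \<and> Ii (Suc e) = (x + 2 * t) mod (r0 + 1)" for t
  proof (induction t)
    case 0
    have "x < r0 + 1" unfolding x_def using emp_step[OF e0(2) e0(1)] by simp
    then show ?case using e0 unfolding x_def by auto
  next
    case (Suc t)
    then obtain e where e: "e \<ge> j" "Obs e = {}" "Ii (Suc e) = (x + 2 * t) mod (r0 + 1)" by blast
    obtain e' where "e' > e" "Obs e' = {}" "Ii (Suc e') = (Ii (Suc e) + 2) mod (r0 + 1)" using next_e[OF e(2) e(1)] by blast
    moreover have "((x + 2 * t) mod (r0 + 1) + 2) mod (r0 + 1) = (x + 2 * Suc t) mod (r0 + 1)"
    proof -
      have "((x + 2 * t) mod (r0 + 1) + 2) mod (r0 + 1) = (x + 2 * t + 2) mod (r0 + 1)" by (rule mod_add_left_eq)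
      moreover have "x + 2 * t + 2 = x + 2 * Suc t" by simp
      ultimately show ?thesis by metis
    qed
    ultimately show ?case using e by (intro exI[of _ e']) auto
  qed
  have xe: "even x" and xl: "x < r0 + 1"
  proof -
    have "even (Ii e0)" using q2_shape[OF Q[of e0]] jj e0(1) unfolding Q2_def by auto
    moreover have "even (r0 + 1)" using r0o by simp
    ultimately show "even x" unfolding x_def using emp_step[OF e0(2) e0(1)] by (simp add: dvd_mod_iff)
    show "x < r0 + 1" unfolding x_def using emp_step[OF e0(2) e0(1)] by simp
  qed
  define t where "t = (r0 + 1 - x + c) div 2"
  have "even (r0 + 1 - x + c)" using xe ce r0o xl by (simp add: dvd_diff_nat)
  then have "2 * t = r0 + 1 - x + c" unfolding t_def by simp
  then have "x + 2 * t = (r0 + 1) + c" using xl by simp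
  moreover have "((r0 + 1) + c) mod (r0 + 1) = c" using cr by (metis mod_add_self1 mod_less)
  ultimately have "(x + 2 * t) mod (r0 + 1) = c" by metis
  then obtain e where e: "e \<ge> j" "Obs e = {}" "Ii (Suc e) = c" using iter[of t] by auto
  have o: "Obs (Suc e) = Sq (Suc e) \<inter> Ff (Suc e) -` {c}" using emp_step[OF e(2) e(1)] e(3) by simp
  have "(j + (Suc e - j), \<pi> (Suc e - j)) \<in> V" using ip unfolding ipath_def by blast
  then have "\<pi> (Suc e - j) \<in> Sq (Suc e)" using e(1) unfolding V_def by simp
  moreover have "Ff (j + (Suc e - j)) (\<pi> (Suc e - j)) = c" using cst by blast
  then have "Ff (Suc e) (\<pi> (Suc e - j)) = c" using e(1) by simp
  ultimately have "T (Suc e)" unfolding T_def using o e by simp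
  then show False using noT by blast
qed

lemma is_dag_g: "isQ2 (\<rho> j0) \<Longrightarrow> dag_g A w j0 Ff"
proof -
  assume q0: "isQ2 (\<rho> j0)"
  have Q: "isQ2 (\<rho> l)" if "j0 \<le> l" for l using q2_after[OF q0 that] .
  show ?thesis
  proof (unfold_locales)
    show "complete A" by (rule compl)
  next
    have "tight (Sq j0) (Ff j0)" using q2_shape[OF q0] unfolding Q2_def by auto
    then have "odd (rank (Ff j0))" "\<forall>k. odd k \<and> k \<le> rank (Ff j0) \<longrightarrow> k \<in> Ff j0 ` Sq j0"
      unfolding tight_def by auto
    then have "1 \<in> Ff j0 ` Sq j0" by (simp add: odd_pos Suc_leI)
    then show "Sq j0 \<noteq> {}" by auto
  next
    fix j q q' assume "j0 \<le> j" "q \<in> Sq j" "q' \<in> trans A q (w j)"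
    then show "Ff (Suc j) q' \<le> Ff j q" using q2_step[OF Q] by blast
  next
    fix j q assume "j0 \<le> j" "q \<in> acc A"
    then show "even (Ff j q)" using q2_shape[OF Q] unfolding Q2_def tight_rankings_def is_ranking_def by auto
  next
    fix j q assume "j0 \<le> j"
    then show "Ff j q \<le> 2 * card (UNIV :: 'q set)"
      using q2_shape[OF Q] unfolding Q2_def tight_rankings_def is_ranking_def by auto
  next
    fix j \<pi> c assume "ipath V j \<pi>" "\<forall>k. Ff (j + k) (\<pi> k) = c"
    then show "odd c" using g_path'[OF q0] by blast
  qed
qed

end

theorem lemma3:
  fixes A :: "('q::finite, 'a::finite) ba"
  assumes "complete A"
  shows "lang (schewe_de A) = lang (schewe A)"
proof
  show "lang (schewe_de A) \<subseteq> lang (schewe A)" by (rule lang_sub)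
next
  show "lang (schewe A) \<subseteq> lang (schewe_de A)"
  proof
    fix w assume "w \<in> lang (schewe A)"
    then obtain \<rho> where run: "is_run (schewe A) (Q1st (init A)) w \<rho>" and acc: "accepting_run (schewe A) \<rho>"
      unfolding lang_def schewe_def schewe_gen_def by auto
    show "w \<in> lang (schewe_de A)"
    proof (cases "\<exists>j. isQ2 (\<rho> j)")
      case False
      interpret B: brun A w 0 \<rho> using run acc assms by unfold_locales
      show ?thesis using B.all_q1 False by blast
    next
      case True
      define j0 where "j0 = (LEAST j. isQ2 (\<rho> j))"
      have q0: "isQ2 (\<rho> j0)" using True LeastI_ex unfolding j0_def by metis
      interpret B: brun A w j0 \<rho> using run acc assms by unfold_locales
      interpret G: dag_g A w j0 B.Ff using B.is_dag_g[OF q0] by simp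
      obtain r N where rN: "j0 < N" "\<forall>j\<ge>N. tight (B.Sq j) (G.h j) \<and> rank (G.h j) = r"
        using G.exists_N by blast
      interpret R: dag_run A w j0 B.Ff r N using rN by unfold_locales auto
      show ?thesis by (rule R.w_in_de)
    qed
  qed
qed

end
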